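(* Let $\mathcal X$ and $\Xi$ be Polish spaces and suppose Assumption A (described in the context) holds. Then: (i) If $(G_n,x^n)\to(G,x)$ in $\mathcal G_*[\mathcal X]$ as $n\to\infty$, then $P^{G_n,x^n}\to P^{G,x}$ weakly in $\mathcal P(\mathcal G_*[\mathcal X^\infty])$. (ii) For every $M\in\mathcal P(\mathcal G_*[\mathcal X])$ the measure $P[M]$ is well defined, and if $M_n\to M$ weakly in $\mathcal P(\mathcal G_*[\mathcal X])$, then $P[M_n]\to P[M]$ weakly in $\mathcal P(\mathcal G_*[\mathcal X^\infty])$.
   Context: All graphs are simple, locally finite, with finite or countably infinite vertex set; $N_v(G)$ denotes the set of neighbours of $v$ in $G$. For a metric space $(\mathcal Y,d)$, a $\mathcal Y$-marked rooted graph is a pair $(G,y)$ with $G$ a connected graph with distinguished root and $y=(y_v)_{v\in G}\in\mathcal Y^G$; two such are isomorphic if there is a bijection of vertex sets preserving root, edges and marks. $\mathcal G_*[\mathcal Y]$ is the set of isomorphism classes. For $k\in\mathbb N$, $B_k(G)$ is the induced rooted subgraph on vertices at graph distance at most $k$ from the root. $(G_n,y^n)\to(G,y)$ in $\mathcal G_*[\mathcal Y]$ means: for every $k\in\mathbb N$ and $\epsilon>0$ there is $n_k$ such that for every $n\ge n_k$ there is a (rooted graph) isomorphism $\varphi:B_k(G_n)\to B_k(G)$ with $\max_{v\in B_k(G_n)}d(y^n_v,y_{\varphi(v)})<\epsilon$; this is a metrizable topology, Polish when $\mathcal Y$ is Polish. Spaces of probability measures carry the weak topology. For a metric space $\mathcal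 Y$, $S^{\sqcup}(\mathcal Y)=\bigsqcup_{k\ge 0}S^k(\mathcal Y)$ is the space of finite unordered sequences of elements of $\mathcal Y$ of arbitrary length (possibly zero), where $S^k(\mathcal Y)$ is $\mathcal Y^k$ modulo the action of the symmetric group and $S^0(\mathcal Y)$ is a point, with the disjoint union topology; for a finite set $A$, $(z_v)_{v\in A}$ is viewed as an element of $S^\sqcup(\mathcal Y)$. $\mathcal X^\infty$ is the space of sequences $(x(k))_{k\in\mathbb N_0}$ in $\mathcal X$ with the product topology, and $x[k]=(x(0),\dots,x(k))\in\mathcal X^{k+1}$. Assumption A: (A.1) for each (possibly disconnected) graph $G$ the $\Xi$-valued noises $(\xi_v(k))_{v\in G,k\in\mathbb N}$ are i.i.d., with the same law for every $G$ (and independent of the initial data); (A.2) for each $k\in\mathbb N_0$, $F^k:\mathcal X^{k+1}\times S^\sqcup(\mathcal X^{k+1})\times\Xi\to\mathcal X$ is continuous. For a graph $G$ and $x\in\mathcal X^G$, the process $X^{G,x}=(X^{G,x}_v)_{v\in G}$ is defined by $X^{G,x}_v(0)=x_v$ and $X^{G,x}_v(k+1)=F^k\big(X^{G,x}_v[k],(X^{G,x}_u[k])_{u\in N_v(G)},\xi_v(k+1)\big)$ for $v\in G$, $k\in\mathbb N_0$. For $(G,x)\in\mathcal G_*[\mathcal X]$, $P^{G,x}\in\mathcal P(\mathcal G_*[\mathcal X^\infty])$ is the law of $(G,X^{G,x})$ (it depends only on the isomorphism class of $(G,x)$). For $M\in\mathcal P(\mathcal G_*[\mathcal X])$, $P[M]\in\mathcal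 P(\mathcal G_*[\mathcal X^\infty])$ is defined by $\int\varphi\,dP[M]=\int\langle P^{G,x},\varphi\rangle\,M(d(G,x))$ for bounded continuous $\varphi$ on $\mathcal G_*[\mathcal X^\infty]$. *)

theory Defs
  imports "HOL-Analysis.Analysis" "HOL-Probability.Probability"
begin

definition borel_of :: "'a topology \<Rightarrow> 'a measure" where
  "borel_of T = sigma (topspace T) {U. openin T U}"

definition weak_conv_top :: "'a topology \<Rightarrow> (nat \<Rightarrow> 'a measure) \<Rightarrow> 'a measure \<Rightarrow> bool" where
  "weak_conv_top T \<mu>s \<mu> \<longleftrightarrow>
     (\<forall>\<phi>. continuous_map T euclideanreal \<phi> \<and> bounded (\<phi> ` topspace T) \<longrightarrow>
        (\<lambda>n. \<integral>z. \<phi> z \<partial>(\<mu>s n)) \<longlonglongrightarrow> (\<integral>z. \<phi> z \<partial>\<mu>))"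

text \<open>Topology determined by a notion of sequential convergence on a set S
  (for a metrizable topology this recovers the topology).\<close>
definition seq_open :: "'a set \<Rightarrow> ((nat \<Rightarrow> 'a) \<Rightarrow> 'a \<Rightarrow> bool) \<Rightarrow> 'a set \<Rightarrow> bool" where
  "seq_open S conv U \<longleftrightarrow> U \<subseteq> S \<and>
     (\<forall>a b. (\<forall>n. a n \<in> S) \<and> b \<in> S \<and> conv a b \<and> b \<in> U \<longrightarrow> eventually (\<lambda>n. a n \<in> U) sequentially)"

lemma istopology_seq_open: "istopology (seq_open S conv)"
proof -
  have I: "seq_open S conv (U \<inter> V)" if U: "seq_open S conv U" and V: "seq_open S conv V" for U V
    unfolding seq_open_def
  proof (intro conjI allI impI)
    show "U \<inter> V \<subseteq> S" using U unfolding seq_open_def by blast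
    fix a b assume h: "(\<forall>n. a n \<in> S) \<and> b \<in> S \<and> conv a b \<and> b \<in> U \<inter> V"
    have "eventually (\<lambda>n. a n \<in> U) sequentially" using U h unfolding seq_open_def by blast
    moreover have "eventually (\<lambda>n. a n \<in> V) sequentially" using V h unfolding seq_open_def by blast
    ultimately show "eventually (\<lambda>n. a n \<in> U \<inter> V) sequentially"
      by (simp add: eventually_conj)
  qed
  have UN: "seq_open S conv (\<Union>K)" if K: "\<forall>U\<in>K. seq_open S conv U" for K
    unfolding seq_open_def
  proof (intro conjI allI impI)
    show "\<Union>K \<subseteq> S" using K unfolding seq_open_def by blast
    fix a b assume h: "(\<forall>n. a n \<in> S) \<and> b \<in> S \<and> conv a b \<and> b \<in> \<Union>K"
    then obtain U where U: "U \<in> K" "b \<in> U" by blast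
    with K h have "eventually (\<lambda>n. a n \<in> U) sequentially" unfolding seq_open_def by blast
    then show "eventually (\<lambda>n. a n \<in> \<Union>K) sequentially"
      by (rule eventually_mono) (use U in blast)
  qed
  show ?thesis unfolding istopology_def using I UN by blast
qed

definition seq_topology :: "'a set \<Rightarrow> ((nat \<Rightarrow> 'a) \<Rightarrow> 'a \<Rightarrow> bool) \<Rightarrow> 'a topology" where
  "seq_topology S conv = topology (seq_open S conv)"

abbreviation pow_top :: "'a topology \<Rightarrow> nat \<Rightarrow> (nat \<Rightarrow> 'a) topology" where
  "pow_top T m \<equiv> product_topology (\<lambda>_. T) {..<m}"

text \<open>The space S^\<sqcup>(Y) of finite unordered sequences, realised as finite multisets;
  its topology is the disjoint union over m of the quotient topologies of Y^m modulo the
  symmetric group, i.e. the final topology of the maps Y^m \<rightarrow> multisets,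
  (y_0,...,y_{m-1}) \<mapsto> {#y_0,...,y_{m-1}#}.\<close>
definition mset_open :: "'a topology \<Rightarrow> 'a multiset set \<Rightarrow> bool" where
  "mset_open T U \<longleftrightarrow> U \<subseteq> {M. set_mset M \<subseteq> topspace T} \<and>
     (\<forall>m. openin (pow_top T m) {f \<in> topspace (pow_top T m). mset (map f [0..<m]) \<in> U})"

lemma istopology_mset_open: "istopology (mset_open T)"
  unfolding istopology_def
proof (intro conjI allI impI)
  fix U V assume U: "mset_open T U" and V: "mset_open T V"
  show "mset_open T (U \<inter> V)"
    unfolding mset_open_def
  proof (intro conjI allI)
    show "U \<inter> V \<subseteq> {M. set_mset M \<subseteq> topspace T}" using U unfolding mset_open_def by blast
    fix m
    have "{f \<in> topspace (pow_top T m). mset (map f [0..<m]) \<in> U \<inter> V} =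
          {f \<in> topspace (pow_top T m). mset (map f [0..<m]) \<in> U} \<inter> {f \<in> topspace (pow_top T m). mset (map f [0..<m]) \<in> V}"
      by blast
    then show "openin (pow_top T m) {f \<in> topspace (pow_top T m). mset (map f [0..<m]) \<in> U \<inter> V}"
      using U V unfolding mset_open_def by (simp add: openin_Int)
  qed
next
  fix K assume K: "\<forall>U\<in>K. mset_open T U"
  show "mset_open T (\<Union>K)"
    unfolding mset_open_def
  proof (intro conjI allI)
    show "\<Union>K \<subseteq> {M. set_mset M \<subseteq> topspace T}" using K unfolding mset_open_def by blast
    fix m
    have "{f \<in> topspace (pow_top T m). mset (map f [0..<m]) \<in> \<Union>K} =
          \<Union>((\<lambda>U. {f \<in> topspace (pow_top T m). mset (map f [0..<m]) \<in> U}) ` K)"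
      by blast
    then show "openin (pow_top T m) {f \<in> topspace (pow_top T m). mset (map f [0..<m]) \<in> \<Union>K}"
      using K unfolding mset_open_def by (auto intro!: openin_Union)
  qed
qed

definition mset_topology :: "'a topology \<Rightarrow> 'a multiset topology" where
  "mset_topology T = topology (mset_open T)"

text \<open>X^{k+1}: the histories x[k] = (x(0),...,x(k)), realised as extensional functions on {..k}.\<close>
abbreviation hist_top :: "nat \<Rightarrow> (nat \<Rightarrow> 'x::topological_space) topology" where
  "hist_top k \<equiv> product_topology (\<lambda>_. euclidean) {..k}"

text \<open>A representative of a Y-marked rooted graph: vertex set V (a subset of nat, so countable),
  adjacency relation E, root r, marks y.\<close>
type_synonym 'y rg = "nat set \<times> (nat \<Rightarrow> nat \<Rightarrow> bool) \<times> nat \<times> (nat \<Rightarrow> 'y)"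

primrec gball :: "nat set \<Rightarrow> (nat \<Rightarrow> nat \<Rightarrow> bool) \<Rightarrow> nat \<Rightarrow> nat \<Rightarrow> nat set" where
  "gball V E r 0 = {r}"
| "gball V E r (Suc k) = gball V E r k \<union> {v \<in> V. \<exists>u \<in> gball V E r k. E u v}"

definition valid_rg :: "'y rg \<Rightarrow> bool" where
  "valid_rg g = (case g of (V, E, r, y) \<Rightarrow>
     r \<in> V \<and> (\<forall>u v. E u v \<longrightarrow> u \<in> V \<and> v \<in> V) \<and> (\<forall>u v. E u v \<longrightarrow> E v u) \<and> (\<forall>v. \<not> E v v) \<and>
     (\<forall>v \<in> V. finite {u. E v u}) \<and> V = (\<Union>k. gball V E r k))"

definition rg_iso :: "'y rg \<Rightarrow> 'y rg \<Rightarrow> bool" where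
  "rg_iso g h = (case g of (V, E, r, y) \<Rightarrow> case h of (V', E', r', y') \<Rightarrow>
     (\<exists>\<phi>. bij_betw \<phi> V V' \<and> \<phi> r = r' \<and> (\<forall>u \<in> V. \<forall>v \<in> V. E u v \<longleftrightarrow> E' (\<phi> u) (\<phi> v)) \<and>
          (\<forall>v \<in> V. y' (\<phi> v) = y v)))"

definition rg_class :: "'y rg \<Rightarrow> 'y rg set" where
  "rg_class g = {h. valid_rg h \<and> rg_iso h g}"

definition Gstar :: "'y rg set set" where
  "Gstar = rg_class ` {g. valid_rg g}"

definition ball_iso :: "'y rg \<Rightarrow> 'y rg \<Rightarrow> nat \<Rightarrow> (nat \<Rightarrow> nat) \<Rightarrow> bool" where
  "ball_iso g h k \<phi> = (case g of (V, E, r, y) \<Rightarrow> case h of (V', E', r', y') \<Rightarrow>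
     bij_betw \<phi> (gball V E r k) (gball V' E' r' k) \<and> \<phi> r = r' \<and>
     (\<forall>u \<in> gball V E r k. \<forall>v \<in> gball V E r k. E u v \<longleftrightarrow> E' (\<phi> u) (\<phi> v)))"

definition rg_conv :: "(nat \<Rightarrow> ('y::metric_space) rg) \<Rightarrow> 'y rg \<Rightarrow> bool" where
  "rg_conv gs g \<longleftrightarrow>
     (\<forall>k. \<forall>\<epsilon>>0. \<exists>N. \<forall>n\<ge>N. \<exists>\<phi>. ball_iso (gs n) g k \<phi> \<and>
        (\<forall>v \<in> (case gs n of (V, E, r, y) \<Rightarrow> gball V E r k).
            dist ((snd (snd (snd (gs n)))) v) ((snd (snd (snd g))) (\<phi> v)) < \<epsilon>))"

definition Gconv :: "(nat \<Rightarrow> ('y::metric_space) rg set) \<Rightarrow> 'y rg set \<Rightarrow> bool" where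
  "Gconv cs c \<longleftrightarrow> (\<exists>gs g. (\<forall>n. gs n \<in> cs n) \<and> g \<in> c \<and> rg_conv gs g)"

definition Gtop :: "('y::metric_space) rg set topology" where
  "Gtop = seq_topology Gstar Gconv"

text \<open>traj F V E x \<xi> k v j is X_v(j) for j \<le> k; \<xi> (v,k) is the noise \<xi>_v(k).\<close>
primrec traj :: "(nat \<Rightarrow> (nat \<Rightarrow> 'x) \<Rightarrow> (nat \<Rightarrow> 'x) multiset \<Rightarrow> 'e \<Rightarrow> 'x) \<Rightarrow> nat set \<Rightarrow>
    (nat \<Rightarrow> nat \<Rightarrow> bool) \<Rightarrow> (nat \<Rightarrow> 'x) \<Rightarrow> (nat \<times> nat \<Rightarrow> 'e) \<Rightarrow> nat \<Rightarrow> nat \<Rightarrow> nat \<Rightarrow> 'x" where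
  "traj F V E x \<xi> 0 = (\<lambda>v j. x v)"
| "traj F V E x \<xi> (Suc k) = (\<lambda>v. (traj F V E x \<xi> k v)(Suc k :=
      F k (restrict (traj F V E x \<xi> k v) {..k})
          (image_mset (\<lambda>u. restrict (traj F V E x \<xi> k u) {..k}) (mset_set {u \<in> V. E v u}))
          (\<xi> (v, Suc k))))"

definition proc :: "(nat \<Rightarrow> (nat \<Rightarrow> 'x) \<Rightarrow> (nat \<Rightarrow> 'x) multiset \<Rightarrow> 'e \<Rightarrow> 'x) \<Rightarrow> nat set \<Rightarrow>
    (nat \<Rightarrow> nat \<Rightarrow> bool) \<Rightarrow> (nat \<Rightarrow> 'x) \<Rightarrow> (nat \<times> nat \<Rightarrow> 'e) \<Rightarrow> nat \<Rightarrow> (nat \<Rightarrow> 'x)" where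
  "proc F V E x \<xi> v = (\<lambda>j. traj F V E x \<xi> j v j)"

text \<open>P^{G,x}: law of (G, X^{G,x}) in G_*[X^\<infinity>], the noises being i.i.d. with law \<nu>
  (realised on the canonical product space).\<close>
definition PGx :: "(nat \<Rightarrow> (nat \<Rightarrow> 'x::metric_space) \<Rightarrow> (nat \<Rightarrow> 'x) multiset \<Rightarrow> 'e \<Rightarrow> 'x) \<Rightarrow> 'e measure \<Rightarrow>
    'x rg \<Rightarrow> (nat \<Rightarrow> 'x) rg set measure" where
  "PGx F \<nu> g = (case g of (V, E, r, x) \<Rightarrow>
     distr (Pi\<^sub>M UNIV (\<lambda>_. \<nu>)) (borel_of Gtop) (\<lambda>\<xi>. rg_class (V, E, r, proc F V E x \<xi>)))"

definition Pclass :: "(nat \<Rightarrow> (nat \<Rightarrow> 'x::metric_space) \<Rightarrow> (nat \<Rightarrow> 'x) multiset \<Rightarrow> 'e \<Rightarrow> 'x) \<Rightarrow> 'e measure \<Rightarrow>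
    'x rg set \<Rightarrow> (nat \<Rightarrow> 'x) rg set measure" where
  "Pclass F \<nu> c = PGx F \<nu> (SOME g. g \<in> c)"

definition is_PM :: "(nat \<Rightarrow> (nat \<Rightarrow> 'x::metric_space) \<Rightarrow> (nat \<Rightarrow> 'x) multiset \<Rightarrow> 'e \<Rightarrow> 'x) \<Rightarrow> 'e measure \<Rightarrow>
    'x rg set measure \<Rightarrow> (nat \<Rightarrow> 'x) rg set measure \<Rightarrow> bool" where
  "is_PM F \<nu> M Q \<longleftrightarrow> prob_space Q \<and> sets Q = sets (borel_of Gtop) \<and>
     (\<forall>\<phi>. continuous_map Gtop euclideanreal \<phi> \<and> bounded (\<phi> ` topspace Gtop) \<longrightarrow>
        (\<lambda>c. \<integral>z. \<phi> z \<partial>(Pclass F \<nu> c)) \<in> borel_measurable M \<and>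
        (\<integral>z. \<phi> z \<partial>Q) = (\<integral>c. (\<integral>z. \<phi> z \<partial>(Pclass F \<nu> c)) \<partial>M))"

definition PM :: "(nat \<Rightarrow> (nat \<Rightarrow> 'x::metric_space) \<Rightarrow> (nat \<Rightarrow> 'x) multiset \<Rightarrow> 'e \<Rightarrow> 'x) \<Rightarrow> 'e measure \<Rightarrow>
    'x rg set measure \<Rightarrow> (nat \<Rightarrow> 'x) rg set measure" where
  "PM F \<nu> M = (THE Q. is_PM F \<nu> M Q)"

end

theory Submission
  imports Defs
begin

section \<open>Gtop basics\<close>

lemma openin_seq_topology: "openin (seq_topology S conv) U \<longleftrightarrow> seq_open S conv U"
  unfolding seq_topology_def using istopology_seq_open topology_inverse' by metis

lemma seq_open_S: "seq_open S conv S"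
  unfolding seq_open_def by auto

lemma topspace_seq_topology: "topspace (seq_topology S conv) = S"
proof -
  have "topspace (seq_topology S conv) \<subseteq> S"
    unfolding topspace_def openin_seq_topology seq_open_def by blast
  moreover have "S \<subseteq> topspace (seq_topology S conv)"
    using seq_open_S openin_subset openin_seq_topology by metis
  ultimately show ?thesis by blast
qed

lemma topspace_Gtop: "topspace Gtop = Gstar"
  unfolding Gtop_def by (rule topspace_seq_topology)

lemma openin_Gtop: "openin Gtop U \<longleftrightarrow> seq_open Gstar Gconv U"
  unfolding Gtop_def by (rule openin_seq_topology)

lemma Gconv_limitin:
  assumes "\<And>n. cs n \<in> Gstar" "c \<in> Gstar" "Gconv cs c"
  shows "limitin Gtop cs c sequentially"
  unfolding limitin_def topspace_Gtop openin_Gtop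
  using assms unfolding seq_open_def by blast

lemma seqcont_imp_cont:
  assumes "\<And>cs c. (\<forall>n. cs n \<in> Gstar) \<Longrightarrow> c \<in> Gstar \<Longrightarrow> Gconv cs c \<Longrightarrow> (\<lambda>n. h (cs n)) \<longlonglongrightarrow> h c"
  shows "continuous_map Gtop euclideanreal h"
  unfolding continuous_map_def
proof (intro conjI allI impI)
  show "h \<in> topspace Gtop \<rightarrow> topspace euclideanreal" by simp
  fix V :: "real set" assume "openin euclideanreal V"
  hence oV: "open V" by simp
  show "openin Gtop {x \<in> topspace Gtop. h x \<in> V}"
    unfolding openin_Gtop topspace_Gtop seq_open_def
  proof (intro conjI allI impI)
    fix a b assume h: "(\<forall>n. a n \<in> Gstar) \<and> b \<in> Gstar \<and> Gconv a b \<and> b \<in> {x \<in> Gstar. h x \<in> V}"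
    then have "(\<lambda>n. h (a n)) \<longlonglongrightarrow> h b" using assms by blast
    then have "eventually (\<lambda>n. h (a n) \<in> V) sequentially"
      using oV h topological_tendstoD by blast
    then show "eventually (\<lambda>n. a n \<in> {x \<in> Gstar. h x \<in> V}) sequentially"
      using h by (auto elim: eventually_mono)
  qed auto
qed

lemma space_borel_of: "space (borel_of T) = topspace T"
  unfolding borel_of_def by (rule space_measure_of) (auto dest: openin_subset)

lemma sets_borel_of: "sets (borel_of T) = sigma_sets (topspace T) {U. openin T U}"
  unfolding borel_of_def by (rule sets_measure_of) (auto dest: openin_subset)

lemma openin_borel_of: "openin T U \<Longrightarrow> U \<in> sets (borel_of T)"
  unfolding sets_borel_of by auto

lemma cont_measurable:
  assumes "continuous_map T euclideanreal h"
  shows "h \<in> borel_measurable (borel_of T)"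
proof (rule borel_measurableI)
  fix S :: "real set" assume "open S"
  then have "openin T {x \<in> topspace T. h x \<in> S}"
    using assms by (simp add: continuous_map_def)
  moreover have "h -` S \<inter> space (borel_of T) = {x \<in> topspace T. h x \<in> S}"
    by (auto simp: space_borel_of)
  ultimately show "h -` S \<inter> space (borel_of T) \<in> sets (borel_of T)"
    by (simp add: openin_borel_of)
qed

lemma gball_root: "r \<in> gball V E r k"
  by (induction k) auto

lemma gball_mono: "j \<le> k \<Longrightarrow> gball V E r j \<subseteq> gball V E r k"
proof (induction k)
  case 0 then show ?case by simp
next
  case (Suc k) then show ?case by (cases "j = Suc k") auto
qed

lemma valid_rgD:
  assumes "valid_rg (V, E, r, y)"
  shows "r \<in> V" "\<And>u v. E u v \<Longrightarrow> u \<in> V" "\<And>u v. E u v \<Longrightarrow> v \<in> V"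
    "\<And>u v. E u v \<Longrightarrow> E v u" "\<And>v. \<not> E v v" "\<And>v. v \<in> V \<Longrightarrow> finite {u. E v u}"
    "V = (\<Union>k. gball V E r k)"
  using assms unfolding valid_rg_def by auto

lemma gball_subset: "r \<in> V \<Longrightarrow> gball V E r k \<subseteq> V"
  by (induction k) auto

lemma gball_finite:
  assumes "valid_rg (V, E, r, y)"
  shows "finite (gball V E r k)"
proof (induction k)
  case 0 then show ?case by simp
next
  case (Suc k)
  have "{v \<in> V. \<exists>u \<in> gball V E r k. E u v} \<subseteq> (\<Union>u\<in>gball V E r k. {v. E u v})" by blast
  moreover have "finite (\<Union>u\<in>gball V E r k. {v. E u v})"
    using Suc valid_rgD(6)[OF assms] gball_subset[OF valid_rgD(1)[OF assms]] by blast
  ultimately show ?case using Suc by (auto intro: finite_subset)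
qed

lemma gball_nbr: "u \<in> gball V E r k \<Longrightarrow> E u v \<Longrightarrow> v \<in> V \<Longrightarrow> v \<in> gball V E r (Suc k)"
  by auto

lemma gball_Suc_cases: "v \<in> gball V E r (Suc k) \<Longrightarrow> v \<in> gball V E r k \<or> (v \<in> V \<and> (\<exists>u\<in>gball V E r k. E u v))"
  by auto

definition gb :: "'y rg \<Rightarrow> nat \<Rightarrow> nat set" where
  "gb g k = (case g of (V, E, r, y) \<Rightarrow> gball V E r k)"

definition mk :: "'y rg \<Rightarrow> nat \<Rightarrow> 'y" where
  "mk g = snd (snd (snd g))"

lemma gb_simp[simp]: "gb (V, E, r, y) k = gball V E r k" by (simp add: gb_def)
lemma mk_simp[simp]: "mk (V, E, r, y) = y" by (simp add: mk_def)

lemma ball_iso_simp: "ball_iso (V, E, r, y) (V', E', r', y') k \<phi> \<longleftrightarrow>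
   bij_betw \<phi> (gball V E r k) (gball V' E' r' k) \<and> \<phi> r = r' \<and>
     (\<forall>u \<in> gball V E r k. \<forall>v \<in> gball V E r k. E u v \<longleftrightarrow> E' (\<phi> u) (\<phi> v))"
  by (simp add: ball_iso_def)

lemma ball_iso_image:
  assumes g: "valid_rg (V, E, r, y)" and h: "valid_rg (V', E', r', y')"
    and iso: "ball_iso (V, E, r, y) (V', E', r', y') k \<phi>" and jk: "j \<le> k"
  shows "\<phi> ` gball V E r j = gball V' E' r' j"
  using jk
proof (induction j)
  case 0 then show ?case using iso by (simp add: ball_iso_simp)
next
  case (Suc j)
  have IH: "\<phi> ` gball V E r j = gball V' E' r' j" using Suc by simp
  have bij: "bij_betw \<phi> (gball V E r k) (gball V' E' r' k)"
    and ed: "\<forall>u \<in> gball V E r k. \<forall>v \<in> gball V E r k. E u v \<longleftrightarrow> E' (\<phi> u) (\<phi> v)"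
    using iso by (auto simp: ball_iso_simp)
  have sub1: "gball V E r (Suc j) \<subseteq> gball V E r k" using Suc by (intro gball_mono) simp
  have sub2: "gball V' E' r' (Suc j) \<subseteq> gball V' E' r' k" using Suc by (intro gball_mono) simp
  have subj: "gball V E r j \<subseteq> gball V E r k" using Suc by (intro gball_mono) simp
  have V'sub: "gball V' E' r' k \<subseteq> V'" using gball_subset valid_rgD(1)[OF h] by blast
  show ?case
  proof
    show "\<phi> ` gball V E r (Suc j) \<subseteq> gball V' E' r' (Suc j)"
    proof
      fix w assume "w \<in> \<phi> ` gball V E r (Suc j)"
      then obtain v where v: "v \<in> gball V E r (Suc j)" "w = \<phi> v" by blast
      show "w \<in> gball V' E' r' (Suc j)"
      proof (cases "v \<in> gball V E r j")
        case True then show ?thesis using IH v by auto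
      next
        case False
        then obtain u where u: "u \<in> gball V E r j" "E u v" using v by auto
        have "E' (\<phi> u) (\<phi> v)" using ed u v sub1 subj by blast
        moreover have "\<phi> v \<in> V'" using v(1) sub1 bij V'sub unfolding bij_betw_def by blast
        moreover have "\<phi> u \<in> gball V' E' r' j" using IH u by auto
        ultimately show ?thesis using v by auto
      qed
    qed
  next
    show "gball V' E' r' (Suc j) \<subseteq> \<phi> ` gball V E r (Suc j)"
    proof
      fix w assume w: "w \<in> gball V' E' r' (Suc j)"
      show "w \<in> \<phi> ` gball V E r (Suc j)"
      proof (cases "w \<in> gball V' E' r' j")
        case True then show ?thesis using IH gball_mono[of j "Suc j"] by auto
      next
        case False
        then obtain u' where u': "u' \<in> gball V' E' r' j" "E' u' w" using w by auto
        obtain u where u: "u \<in> gball V E r j" "u' = \<phi> u" using IH u' by auto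
        have "w \<in> gball V' E' r' k" using w sub2 by blast
        then obtain v where v: "v \<in> gball V E r k" "w = \<phi> v" using bij unfolding bij_betw_def by blast
        have "E u v" using ed u v u' subj by blast
        then have "v \<in> V" using valid_rgD(3)[OF g] by blast
        then have "v \<in> gball V E r (Suc j)" using u \<open>E u v\<close> by auto
        then show ?thesis using v by auto
      qed
    qed
  qed
qed

lemma ball_iso_restrict:
  assumes g: "valid_rg g" and h: "valid_rg h" and iso: "ball_iso g h k \<phi>" and jk: "j \<le> k"
  shows "ball_iso g h j \<phi>"
proof -
  obtain V E r y where gg: "g = (V, E, r, y)" by (cases g) auto
  obtain V' E' r' y' where hh: "h = (V', E', r', y')" by (cases h) auto
  have im: "\<phi> ` gball V E r j = gball V' E' r' j"
    using ball_iso_image g h iso jk gg hh by blast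
  have sub: "gball V E r j \<subseteq> gball V E r k" using jk by (rule gball_mono)
  have bij: "bij_betw \<phi> (gball V E r k) (gball V' E' r' k)" and rt: "\<phi> r = r'"
    and ed: "\<forall>u \<in> gball V E r k. \<forall>v \<in> gball V E r k. E u v \<longleftrightarrow> E' (\<phi> u) (\<phi> v)"
    using iso gg hh by (auto simp: ball_iso_simp)
  have "bij_betw \<phi> (gball V E r j) (gball V' E' r' j)"
    using bij sub im by (auto simp: bij_betw_def intro: inj_on_subset)
  then show ?thesis using gg hh rt ed sub by (auto simp: ball_iso_simp)
qed

lemma ball_iso_inv:
  assumes iso: "ball_iso g h k \<phi>"
  shows "ball_iso h g k (inv_into (gb g k) \<phi>)"
    and "\<And>v. v \<in> gb h k \<Longrightarrow> inv_into (gb g k) \<phi> v \<in> gb g k \<and> \<phi> (inv_into (gb g k) \<phi> v) = v"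
    and "\<And>v. v \<in> gb g k \<Longrightarrow> inv_into (gb g k) \<phi> (\<phi> v) = v"
proof -
  obtain V E r y where gg: "g = (V, E, r, y)" by (cases g) auto
  obtain V' E' r' y' where hh: "h = (V', E', r', y')" by (cases h) auto
  let ?B = "gball V E r k" and ?B' = "gball V' E' r' k"
  have bij: "bij_betw \<phi> ?B ?B'" and rt: "\<phi> r = r'"
    and ed: "\<forall>u \<in> ?B. \<forall>v \<in> ?B. E u v \<longleftrightarrow> E' (\<phi> u) (\<phi> v)"
    using iso gg hh by (auto simp: ball_iso_simp)
  let ?\<psi> = "inv_into ?B \<phi>"
  have b2: "bij_betw ?\<psi> ?B' ?B" using bij by (rule bij_betw_inv_into)
  have inj: "inj_on \<phi> ?B" using bij by (simp add: bij_betw_def)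
  have r2: "?\<psi> r' = r" using rt inj gball_root[of r V E k] by (metis inv_into_f_f)
  have fi: "\<And>v. v \<in> ?B' \<Longrightarrow> \<phi> (?\<psi> v) = v" using bij by (simp add: bij_betw_inv_into_right)
  have ed2: "\<forall>u \<in> ?B'. \<forall>v \<in> ?B'. E' u v \<longleftrightarrow> E (?\<psi> u) (?\<psi> v)"
  proof (intro ballI)
    fix u v assume u: "u \<in> ?B'" and v: "v \<in> ?B'"
    have "?\<psi> u \<in> ?B" "?\<psi> v \<in> ?B" using b2 u v by (auto simp: bij_betw_def)
    then show "E' u v \<longleftrightarrow> E (?\<psi> u) (?\<psi> v)" using ed fi u v by metis
  qed
  show "ball_iso h g k (inv_into (gb g k) \<phi>)"
    using b2 r2 ed2 gg hh by (simp add: ball_iso_simp)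
  show "\<And>v. v \<in> gb h k \<Longrightarrow> inv_into (gb g k) \<phi> v \<in> gb g k \<and> \<phi> (inv_into (gb g k) \<phi> v) = v"
    using b2 fi gg hh by (auto simp: bij_betw_def)
  show "\<And>v. v \<in> gb g k \<Longrightarrow> inv_into (gb g k) \<phi> (\<phi> v) = v"
    using inj gg by simp
qed

lemma ball_iso_comp:
  assumes "ball_iso g h k \<phi>" "ball_iso h l k \<psi>"
  shows "ball_iso g l k (\<psi> \<circ> \<phi>)"
proof -
  obtain V E r y where gg: "g = (V, E, r, y)" by (cases g) auto
  obtain V' E' r' y' where hh: "h = (V', E', r', y')" by (cases h) auto
  obtain V'' E'' r'' y'' where ll: "l = (V'', E'', r'', y'')" by (cases l) auto
  have b1: "bij_betw \<phi> (gball V E r k) (gball V' E' r' k)" and r1: "\<phi> r = r'"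
    and e1: "\<forall>u \<in> gball V E r k. \<forall>v \<in> gball V E r k. E u v \<longleftrightarrow> E' (\<phi> u) (\<phi> v)"
    using assms(1) unfolding gg hh ball_iso_simp by auto
  have b2: "bij_betw \<psi> (gball V' E' r' k) (gball V'' E'' r'' k)" and r2: "\<psi> r' = r''"
    and e2: "\<forall>u \<in> gball V' E' r' k. \<forall>v \<in> gball V' E' r' k. E' u v \<longleftrightarrow> E'' (\<psi> u) (\<psi> v)"
    using assms(2) unfolding hh ll ball_iso_simp by auto
  have "bij_betw (\<psi> \<circ> \<phi>) (gball V E r k) (gball V'' E'' r'' k)" using b1 b2 by (rule bij_betw_trans)
  moreover have "\<forall>u \<in> gball V E r k. \<forall>v \<in> gball V E r k. E u v \<longleftrightarrow> E'' (\<psi> (\<phi> u)) (\<psi> (\<phi> v))"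
  proof (intro ballI)
    fix u v assume "u \<in> gball V E r k" "v \<in> gball V E r k"
    moreover then have "\<phi> u \<in> gball V' E' r' k" "\<phi> v \<in> gball V' E' r' k" using b1 by (auto simp: bij_betw_def)
    ultimately show "E u v \<longleftrightarrow> E'' (\<psi> (\<phi> u)) (\<psi> (\<phi> v))" using e1 e2 by blast
  qed
  ultimately show ?thesis unfolding gg ll ball_iso_simp using r1 r2 by simp
qed

lemma ball_iso_maps:
  assumes "ball_iso g h k \<phi>" "v \<in> gb g k" shows "\<phi> v \<in> gb h k"
proof -
  obtain V E r y where gg: "g = (V, E, r, y)" by (cases g) auto
  obtain V' E' r' y' where hh: "h = (V', E', r', y')" by (cases h) auto
  show ?thesis using assms unfolding gg hh ball_iso_simp by (auto simp: bij_betw_def)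
qed

lemma rg_iso_ball:
  assumes g: "valid_rg g" and h: "valid_rg h" and iso: "rg_iso g h"
  shows "\<exists>\<phi>. \<forall>k. ball_iso g h k \<phi> \<and> (\<forall>v \<in> gb g k. mk h (\<phi> v) = mk g v)"
proof -
  obtain V E r y where gg: "g = (V, E, r, y)" by (cases g) auto
  obtain V' E' r' y' where hh: "h = (V', E', r', y')" by (cases h) auto
  obtain \<phi> where bij: "bij_betw \<phi> V V'" and rt: "\<phi> r = r'"
    and ed: "\<forall>u \<in> V. \<forall>v \<in> V. E u v \<longleftrightarrow> E' (\<phi> u) (\<phi> v)" and mm: "\<forall>v \<in> V. y' (\<phi> v) = y v"
    using iso gg hh unfolding rg_iso_def by auto
  have gv: "valid_rg (V, E, r, y)" and hv: "valid_rg (V', E', r', y')" using g h gg hh by auto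
  have subV: "\<And>k. gball V E r k \<subseteq> V" using gball_subset valid_rgD(1)[OF gv] by blast
  have im: "\<phi> ` gball V E r k = gball V' E' r' k" for k
  proof (induction k)
    case 0 then show ?case using rt by simp
  next
    case (Suc k)
    show ?case
    proof
      show "\<phi> ` gball V E r (Suc k) \<subseteq> gball V' E' r' (Suc k)"
      proof
        fix w assume "w \<in> \<phi> ` gball V E r (Suc k)"
        then obtain v where v: "v \<in> gball V E r (Suc k)" "w = \<phi> v" by blast
        show "w \<in> gball V' E' r' (Suc k)"
        proof (cases "v \<in> gball V E r k")
          case True then show ?thesis using Suc v by auto
        next
          case False
          then obtain u where u: "u \<in> gball V E r k" "E u v" "v \<in> V" using v by auto
          have "E' (\<phi> u) (\<phi> v)" using ed u subV by blast
          moreover have "\<phi> v \<in> V'" using u bij by (auto simp: bij_betw_def)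
          ultimately show ?thesis using Suc u v by auto
        qed
      qed
    next
      show "gball V' E' r' (Suc k) \<subseteq> \<phi> ` gball V E r (Suc k)"
      proof
        fix w assume w: "w \<in> gball V' E' r' (Suc k)"
        show "w \<in> \<phi> ` gball V E r (Suc k)"
        proof (cases "w \<in> gball V' E' r' k")
          case True then show ?thesis using Suc gball_mono[of k "Suc k"] by auto
        next
          case False
          then obtain u' where u': "u' \<in> gball V' E' r' k" "E' u' w" "w \<in> V'" using w by auto
          obtain u where u: "u \<in> gball V E r k" "u' = \<phi> u" using Suc u' by auto
          obtain v where v: "v \<in> V" "w = \<phi> v" using u' bij by (auto simp: bij_betw_def)
          have "E u v" using ed u v u' subV by blast
          then have "v \<in> gball V E r (Suc k)" using u v by auto
          then show ?thesis using v by auto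
        qed
      qed
    qed
  qed
  have "ball_iso g h k \<phi> \<and> (\<forall>v \<in> gb g k. mk h (\<phi> v) = mk g v)" for k
  proof -
    have "inj_on \<phi> (gball V E r k)" using bij subV by (auto simp: bij_betw_def intro: inj_on_subset)
    then have "bij_betw \<phi> (gball V E r k) (gball V' E' r' k)" using im by (simp add: bij_betw_def)
    moreover have "\<forall>u \<in> gball V E r k. \<forall>v \<in> gball V E r k. E u v \<longleftrightarrow> E' (\<phi> u) (\<phi> v)"
      using ed subV by blast
    moreover have "\<forall>v \<in> gball V E r k. y' (\<phi> v) = y v" using mm subV by blast
    ultimately show ?thesis unfolding gg hh ball_iso_simp using rt by simp
  qed
  then show ?thesis by blast
qed

definition close :: "('y::metric_space) rg \<Rightarrow> 'y rg \<Rightarrow> nat \<Rightarrow> real \<Rightarrow> bool" where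
  "close g h k e \<longleftrightarrow> (\<exists>\<phi>. ball_iso g h k \<phi> \<and> (\<forall>v\<in>gb g k. dist (mk g v) (mk h (\<phi> v)) \<le> e))"

lemma gb_mono: "j \<le> k \<Longrightarrow> gb g j \<subseteq> gb g k"
  by (cases g) (auto simp: gball_mono)

lemma close_restrict:
  assumes "valid_rg g" "valid_rg h" "close g h k e" "j \<le> k"
  shows "close g h j e"
  using assms ball_iso_restrict gb_mono unfolding close_def by blast

lemma close_sym:
  assumes "close g h k e" shows "close h g k e"
proof -
  obtain \<phi> where iso: "ball_iso g h k \<phi>" and d: "\<forall>v\<in>gb g k. dist (mk g v) (mk h (\<phi> v)) \<le> e"
    using assms unfolding close_def by blast
  let ?\<psi> = "inv_into (gb g k) \<phi>"
  have "\<forall>v\<in>gb h k. dist (mk h v) (mk g (?\<psi> v)) \<le> e"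
  proof
    fix v assume v: "v \<in> gb h k"
    then have "?\<psi> v \<in> gb g k" "\<phi> (?\<psi> v) = v" using ball_iso_inv(2)[OF iso] by auto
    then show "dist (mk h v) (mk g (?\<psi> v)) \<le> e" using d by (metis dist_commute)
  qed
  then show ?thesis using ball_iso_inv(1)[OF iso] unfolding close_def by blast
qed

lemma close_trans:
  assumes "close g h k e1" "close h l k e2" shows "close g l k (e1 + e2)"
proof -
  obtain \<phi> where iso: "ball_iso g h k \<phi>" and d: "\<forall>v\<in>gb g k. dist (mk g v) (mk h (\<phi> v)) \<le> e1"
    using assms unfolding close_def by blast
  obtain \<psi> where iso2: "ball_iso h l k \<psi>" and d2: "\<forall>v\<in>gb h k. dist (mk h v) (mk l (\<psi> v)) \<le> e2"
    using assms unfolding close_def by blast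
  have "\<forall>v\<in>gb g k. dist (mk g v) (mk l ((\<psi> \<circ> \<phi>) v)) \<le> e1 + e2"
  proof
    fix v assume v: "v \<in> gb g k"
    then have "\<phi> v \<in> gb h k" using ball_iso_maps[OF iso] by blast
    then have "dist (mk h (\<phi> v)) (mk l (\<psi> (\<phi> v))) \<le> e2" using d2 by blast
    moreover have "dist (mk g v) (mk h (\<phi> v)) \<le> e1" using d v by blast
    ultimately show "dist (mk g v) (mk l ((\<psi> \<circ> \<phi>) v)) \<le> e1 + e2"
      using dist_triangle[of "mk g v" "mk l (\<psi> (\<phi> v))" "mk h (\<phi> v)"] by simp
  qed
  then show ?thesis using ball_iso_comp[OF iso iso2] unfolding close_def by blast
qed

lemma close_refl: "close g g k 0"
proof -
  obtain V E r y where gg: "g = (V, E, r, y)" by (cases g) auto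
  have "ball_iso g g k id" unfolding gg ball_iso_simp by simp
  then show ?thesis unfolding close_def by fastforce
qed

lemma Gstar_mem:
  assumes "a \<in> Gstar" "h \<in> a" shows "valid_rg h"
  using assms unfolding Gstar_def rg_class_def by auto

lemma close_class:
  assumes "a \<in> Gstar" "h \<in> a" "h' \<in> a" shows "close h h' k 0"
proof -
  obtain b0 where b0: "valid_rg b0" "a = rg_class b0" using assms unfolding Gstar_def by auto
  have h: "valid_rg h" "rg_iso h b0" and h': "valid_rg h'" "rg_iso h' b0"
    using assms b0 unfolding rg_class_def by auto
  have c1: "close h b0 k 0"
  proof -
    obtain \<phi> where "\<forall>k. ball_iso h b0 k \<phi> \<and> (\<forall>v \<in> gb h k. mk b0 (\<phi> v) = mk h v)"
      using rg_iso_ball[OF h(1) b0(1) h(2)] by blast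
    then show ?thesis unfolding close_def by force
  qed
  have c2: "close h' b0 k 0"
  proof -
    obtain \<phi> where "\<forall>k. ball_iso h' b0 k \<phi> \<and> (\<forall>v \<in> gb h' k. mk b0 (\<phi> v) = mk h' v)"
      using rg_iso_ball[OF h'(1) b0(1) h'(2)] by blast
    then show ?thesis unfolding close_def by force
  qed
  show ?thesis using close_trans[OF c1 close_sym[OF c2]] by simp
qed

definition rep :: "'y rg set \<Rightarrow> 'y rg" where "rep a = (SOME g. g \<in> a)"

lemma rep_in: "a \<in> Gstar \<Longrightarrow> rep a \<in> a"
proof -
  assume "a \<in> Gstar"
  then obtain g where "valid_rg g" "a = rg_class g" unfolding Gstar_def by blast
  moreover have "rg_iso g g"
    unfolding rg_iso_def by (cases g) (auto intro!: exI[of _ id])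
  ultimately have "g \<in> a" unfolding rg_class_def by blast
  then show ?thesis unfolding rep_def by (rule someI)
qed

definition Dset :: "('y::metric_space) rg set \<Rightarrow> 'y rg set \<Rightarrow> real set" where
  "Dset a b = {max ((1/2)^k) e | k e g h. g \<in> a \<and> h \<in> b \<and> 0 \<le> e \<and> close g h k e}"

definition Dc :: "('y::metric_space) rg set \<Rightarrow> 'y rg set \<Rightarrow> real" where
  "Dc a b = Inf (insert 1 (Dset a b))"

lemma Dset_nonneg: "s \<in> Dset a b \<Longrightarrow> 0 \<le> s"
  unfolding Dset_def by auto

lemma bdd_Dset: "bdd_below (insert 1 (Dset a b))"
  by (rule bdd_belowI[of _ 0]) (auto dest: Dset_nonneg)

lemma Dc_ge0: "0 \<le> Dc a b"
  unfolding Dc_def by (rule cInf_greatest) (auto dest: Dset_nonneg)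

lemma Dc_le1: "Dc a b \<le> 1"
  unfolding Dc_def by (rule cInf_lower[OF _ bdd_Dset]) simp

lemma Dc_le_elem: "s \<in> insert 1 (Dset a b) \<Longrightarrow> Dc a b \<le> s"
  unfolding Dc_def by (rule cInf_lower[OF _ bdd_Dset])

lemma Dc_le: "g \<in> a \<Longrightarrow> h \<in> b \<Longrightarrow> 0 \<le> e \<Longrightarrow> close g h k e \<Longrightarrow> Dc a b \<le> max ((1/2)^k) e"
  by (rule Dc_le_elem) (unfold Dset_def, blast)

lemma Dc_lt:
  assumes "Dc a b < t" "t \<le> 1"
  shows "\<exists>k e g h. g \<in> a \<and> h \<in> b \<and> 0 \<le> e \<and> close g h k e \<and> max ((1/2)^k) e < t"
proof -
  obtain s where s: "s \<in> insert 1 (Dset a b)" "s < t"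
    using assms(1) unfolding Dc_def by (meson cInf_lessD insert_not_empty)
  then have "s \<in> Dset a b" using assms(2) by auto
  then show ?thesis using s unfolding Dset_def by blast
qed

lemma Dc_sym: "Dc a b = Dc b a"
proof -
  have "Dset a b = Dset b a" unfolding Dset_def by (blast intro: close_sym)
  then show ?thesis unfolding Dc_def by simp
qed

lemma le_pow_half_imp:
  fixes x :: real assumes "\<And>k. x \<le> (1/2)^k" shows "x \<le> 0"
proof (rule ccontr)
  assume "\<not> x \<le> 0"
  then obtain k where "(1/2::real)^k < x" using real_arch_pow_inv[of x "1/2"] by auto
  then show False using assms[of k] by simp
qed

lemma Dc_self: "a \<in> Gstar \<Longrightarrow> Dc a a = 0"
proof -
  assume a: "a \<in> Gstar"
  have "Dc a a \<le> (1/2)^k" for k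
    using Dc_le[OF rep_in[OF a] rep_in[OF a] order_refl close_refl[of "rep a" k]] by simp
  then show ?thesis using le_pow_half_imp Dc_ge0 by (metis order_antisym)
qed

lemma Dc_tri:
  assumes a: "a \<in> Gstar" and b: "b \<in> Gstar" and c: "c \<in> Gstar"
  shows "Dc a c \<le> Dc a b + Dc b c"
proof -
  have key: "Dc a c \<le> s1 + s2" if s1: "s1 \<in> insert 1 (Dset a b)" and s2: "s2 \<in> insert 1 (Dset b c)" for s1 s2
  proof -
    have n1: "0 \<le> s1" and n2: "0 \<le> s2" using s1 s2 by (auto dest: Dset_nonneg)
    show ?thesis
    proof (cases "s1 = 1 \<or> s2 = 1")
      case True then show ?thesis using Dc_le1[of a c] n1 n2 by auto
    next
      case False
      then have "s1 \<in> Dset a b" "s2 \<in> Dset b c" using s1 s2 by auto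
      then obtain k1 e1 g h k2 e2 h' l where
        A: "s1 = max ((1/2)^k1) e1" "g \<in> a" "h \<in> b" "0 \<le> e1" "close g h k1 e1" and
        B: "s2 = max ((1/2)^k2) e2" "h' \<in> b" "l \<in> c" "0 \<le> e2" "close h' l k2 e2"
        unfolding Dset_def by blast
      let ?k = "min k1 k2"
      have v: "valid_rg g" "valid_rg h" "valid_rg h'" "valid_rg l"
        using A B a b c Gstar_mem by blast+
      have c1: "close g h ?k e1" using close_restrict[OF v(1,2) A(5)] by simp
      have c2: "close h h' ?k 0" using close_class[OF b A(3) B(2)] .
      have c3: "close h' l ?k e2" using close_restrict[OF v(3,4) B(5)] by simp
      have "close g l ?k (e1 + e2)" using close_trans[OF close_trans[OF c1 c2] c3] by simp
      then have "Dc a c \<le> max ((1/2)^?k) (e1 + e2)" using Dc_le[OF A(2) B(3)] A(4) B(4) by simp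
      also have "\<dots> \<le> s1 + s2"
      proof -
        have "(1/2::real)^?k = max ((1/2)^k1) ((1/2)^k2)"
          by (cases "k1 \<le> k2") (auto simp: min_def max_def power_decreasing)
        then show ?thesis using A B by auto
      qed
      finally show ?thesis .
    qed
  qed
  have "Dc a c - s2 \<le> Dc a b" if s2: "s2 \<in> insert 1 (Dset b c)" for s2
    unfolding Dc_def[of a b] by (rule cInf_greatest) (use key s2 in force)+
  then have "Dc a c - Dc a b \<le> Dc b c"
    unfolding Dc_def[of b c] by (intro cInf_greatest) (force simp: algebra_simps)+
  then show ?thesis by simp
qed

lemma Gconv_Dc:
  assumes "Gconv cs c"
  shows "(\<lambda>n. Dc (cs n) c) \<longlonglongrightarrow> 0"
proof (rule LIMSEQ_I)
  fix t :: real assume t: "0 < t"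
  obtain gs g where gs: "\<forall>n. gs n \<in> cs n" "g \<in> c" "rg_conv gs g"
    using assms unfolding Gconv_def by blast
  obtain k where k: "(1/2::real)^k < t" using real_arch_pow_inv[of t "1/2"] t by auto
  obtain N where N: "\<forall>n\<ge>N. \<exists>\<phi>. ball_iso (gs n) g k \<phi> \<and>
        (\<forall>v \<in> (case gs n of (V, E, r, y) \<Rightarrow> gball V E r k).
            dist ((snd (snd (snd (gs n)))) v) ((snd (snd (snd g))) (\<phi> v)) < t/2)"
    using gs(3) t unfolding rg_conv_def by (metis half_gt_zero)
  have "norm (Dc (cs n) c - 0) < t" if n: "n \<ge> N" for n
  proof -
    obtain \<phi> where "ball_iso (gs n) g k \<phi>" "\<forall>v\<in>gb (gs n) k. dist (mk (gs n) v) (mk g (\<phi> v)) < t/2"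
      using N n unfolding gb_def mk_def by blast
    then have "close (gs n) g k (t/2)" unfolding close_def by (metis less_imp_le)
    then have "Dc (cs n) c \<le> max ((1/2)^k) (t/2)" using Dc_le[of "gs n" "cs n" g c "t/2" k] gs t by simp
    then show ?thesis using Dc_ge0[of "cs n" c] k t by simp
  qed
  then show "\<exists>no. \<forall>n\<ge>no. norm (Dc (cs n) c - 0) < t" by blast
qed

lemma Dc_rg_conv:
  assumes cs: "\<And>n. cs n \<in> Gstar" and c: "c \<in> Gstar" and D: "(\<lambda>n. Dc (cs n) c) \<longlonglongrightarrow> 0"
  shows "rg_conv (\<lambda>n. rep (cs n)) (rep c)"
  unfolding rg_conv_def
proof (intro allI impI)
  fix k :: nat and \<epsilon> :: real assume \<epsilon>: "\<epsilon> > 0"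
  define t where "t = min ((1/2::real)^k) \<epsilon>"
  have t: "0 < t" "t \<le> 1" "t \<le> (1/2)^k" "t \<le> \<epsilon>" using \<epsilon> power_le_one[of "1/2::real" k] unfolding t_def by (auto simp: min_def)
  obtain N where N: "\<forall>n\<ge>N. norm (Dc (cs n) c - 0) < t" using LIMSEQ_D[OF D t(1)] by blast
  have "\<exists>\<phi>. ball_iso (rep (cs n)) (rep c) k \<phi> \<and>
        (\<forall>v \<in> (case rep (cs n) of (V, E, r, y) \<Rightarrow> gball V E r k).
            dist ((snd (snd (snd (rep (cs n))))) v) ((snd (snd (snd (rep c)))) (\<phi> v)) < \<epsilon>)" if n: "n \<ge> N" for n
  proof -
    have "Dc (cs n) c < t" using N n Dc_ge0[of "cs n" c] by auto
    then obtain k' e g h where A: "g \<in> cs n" "h \<in> c" "0 \<le> e" "close g h k' e" "max ((1/2)^k') e < t"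
      using Dc_lt t(2) by blast
    have kk: "k \<le> k'"
    proof (rule ccontr)
      assume "\<not> k \<le> k'"
      then have "(1/2::real)^k \<le> (1/2)^k'" by (intro power_decreasing) auto
      moreover have "(1/2::real)^k' < t" using A(5) by simp
      ultimately show False using t(3) by linarith
    qed
    have v: "valid_rg g" "valid_rg h" using A cs c Gstar_mem by blast+
    have c1: "close (rep (cs n)) g k 0" using close_class[OF cs rep_in[OF cs] A(1)] .
    have c2: "close g h k e" using close_restrict[OF v A(4) kk] .
    have c3: "close h (rep c) k 0" using close_class[OF c A(2) rep_in[OF c]] .
    have "close (rep (cs n)) (rep c) k e" using close_trans[OF close_trans[OF c1 c2] c3] by simp
    then obtain \<phi> where P1: "ball_iso (rep (cs n)) (rep c) k \<phi>"
      and P2: "\<forall>v\<in>gb (rep (cs n)) k. dist (mk (rep (cs n)) v) (mk (rep c) (\<phi> v)) \<le> e"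
      unfolding close_def by blast
    have "e < \<epsilon>" using A(5) t(4) by simp
    then have "\<forall>v\<in>gb (rep (cs n)) k. dist (mk (rep (cs n)) v) (mk (rep c) (\<phi> v)) < \<epsilon>"
      using P2 by fastforce
    then show ?thesis using P1 unfolding gb_def mk_def by blast
  qed
  then show "\<exists>N. \<forall>n\<ge>N. \<exists>\<phi>. ball_iso (rep (cs n)) (rep c) k \<phi> \<and>
        (\<forall>v \<in> (case rep (cs n) of (V, E, r, y) \<Rightarrow> gball V E r k).
            dist ((snd (snd (snd (rep (cs n))))) v) ((snd (snd (snd (rep c)))) (\<phi> v)) < \<epsilon>)" by blast
qed

lemma Gconv_rep:
  assumes "\<And>n. cs n \<in> Gstar" "c \<in> Gstar" "Gconv cs c"
  shows "rg_conv (\<lambda>n. rep (cs n)) (rep c)"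
  using Dc_rg_conv[OF assms(1,2) Gconv_Dc[OF assms(3)]] .

lemma Dc_Gconv:
  assumes "\<And>n. cs n \<in> Gstar" "c \<in> Gstar" "(\<lambda>n. Dc (cs n) c) \<longlonglongrightarrow> 0"
  shows "Gconv cs c"
  unfolding Gconv_def
  by (rule exI[of _ "\<lambda>n. rep (cs n)"], rule exI[of _ "rep c"]) (simp add: Dc_rg_conv[OF assms] rep_in assms)

definition seqc :: "(('y::metric_space) rg set \<Rightarrow> real) \<Rightarrow> bool" where
  "seqc h \<longleftrightarrow> (\<forall>cs c. (\<forall>n. cs n \<in> Gstar) \<longrightarrow> c \<in> Gstar \<longrightarrow> Gconv cs c \<longrightarrow> (\<lambda>n. h (cs n)) \<longlonglongrightarrow> h c)"

lemma seqc_cont: "seqc h \<Longrightarrow> continuous_map Gtop euclideanreal h"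
  unfolding seqc_def by (rule seqcont_imp_cont) blast

definition fU :: "('y::metric_space) rg set set \<Rightarrow> 'y rg set \<Rightarrow> real" where
  "fU U a = Inf (insert 1 ((\<lambda>b. Dc a b) ` (Gstar - U)))"

lemma bdd_fU: "bdd_below (insert 1 ((\<lambda>b. Dc a b) ` S))"
  by (rule bdd_belowI[of _ 0]) (auto simp: Dc_ge0)

lemma fU_ge0: "0 \<le> fU U a"
  unfolding fU_def by (rule cInf_greatest) (auto simp: Dc_ge0)

lemma fU_le1: "fU U a \<le> 1"
  unfolding fU_def by (rule cInf_lower[OF _ bdd_fU]) simp

lemma fU_lip:
  assumes a: "a \<in> Gstar" and a': "a' \<in> Gstar"
  shows "fU U a \<le> Dc a a' + fU U a'"
proof -
  have "fU U a - Dc a a' \<le> s" if s: "s \<in> insert 1 ((\<lambda>b. Dc a' b) ` (Gstar - U))" for s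
  proof (cases "s = 1")
    case True then show ?thesis using fU_le1[of U a] Dc_ge0[of a a'] by simp
  next
    case False
    then obtain b where b: "b \<in> Gstar - U" "s = Dc a' b" using s by auto
    have "fU U a \<le> Dc a b" unfolding fU_def by (rule cInf_lower[OF _ bdd_fU]) (use b in auto)
    also have "\<dots> \<le> Dc a a' + Dc a' b" using Dc_tri a a' b by blast
    finally show ?thesis using b by simp
  qed
  then have "fU U a - Dc a a' \<le> fU U a'"
    unfolding fU_def[of U a'] by (intro cInf_greatest) auto
  then show ?thesis by simp
qed

lemma fU_seqc:
  fixes U :: "('y::metric_space) rg set set"
  shows "seqc (fU U)"
  unfolding seqc_def
proof (intro allI impI)
  fix cs :: "nat \<Rightarrow> 'y rg set" and c assume cs: "\<forall>n. cs n \<in> Gstar" and c: "c \<in> Gstar" and conv: "Gconv cs c"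
  have D: "(\<lambda>n. Dc (cs n) c) \<longlonglongrightarrow> 0" using Gconv_Dc[OF conv] .
  have "(\<lambda>n. fU U (cs n) - fU U c) \<longlonglongrightarrow> 0"
  proof (rule Lim_null_comparison)
    show "eventually (\<lambda>n. norm (fU U (cs n) - fU U c) \<le> 2 * Dc (cs n) c) sequentially"
    proof (rule always_eventually, rule allI)
      fix n
      have "fU U (cs n) \<le> Dc (cs n) c + fU U c" using fU_lip cs c by blast
      moreover have "fU U c \<le> Dc c (cs n) + fU U (cs n)" using fU_lip cs c by blast
      ultimately show "norm (fU U (cs n) - fU U c) \<le> 2 * Dc (cs n) c"
        using Dc_sym[of c "cs n"] Dc_ge0[of "cs n" c] by simp
    qed
    show "(\<lambda>n. 2 * Dc (cs n) c) \<longlonglongrightarrow> 0" using tendsto_mult_right_zero[OF D] by simp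
  qed
  then show "(\<lambda>n. fU U (cs n)) \<longlonglongrightarrow> fU U c" by (rule LIM_zero_cancel)
qed

lemma fU_zero: "a \<in> Gstar \<Longrightarrow> a \<notin> U \<Longrightarrow> fU U a = 0"
proof -
  assume a: "a \<in> Gstar" "a \<notin> U"
  have "fU U a \<le> Dc a a" unfolding fU_def by (rule cInf_lower[OF _ bdd_fU]) (use a in auto)
  then show ?thesis using Dc_self[OF a(1)] fU_ge0[of U a] by simp
qed

lemma fU_pos:
  assumes U: "openin Gtop U" and a: "a \<in> U"
  shows "0 < fU U a"
proof (rule ccontr)
  assume "\<not> 0 < fU U a"
  then have f0: "fU U a \<le> 0" by simp
  have aG: "a \<in> Gstar" using U a openin_subset topspace_Gtop by blast
  have "\<forall>n. \<exists>b. b \<in> Gstar - U \<and> Dc a b < 1 / (Suc n)"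
  proof
    fix n
    have "Inf (insert 1 ((\<lambda>b. Dc a b) ` (Gstar - U))) < 1 / Suc n"
    proof -
      have "0 < 1 / real (Suc n)" by simp
      then show ?thesis using f0 unfolding fU_def by linarith
    qed
    then obtain s where s: "s \<in> insert 1 ((\<lambda>b. Dc a b) ` (Gstar - U))" "s < 1 / Suc n"
      by (meson cInf_lessD insert_not_empty)
    have "1 / real (Suc n) \<le> 1" by simp
    then have "s \<noteq> 1" using s by auto
    then show "\<exists>b. b \<in> Gstar - U \<and> Dc a b < 1 / (Suc n)" using s by auto
  qed
  from choice[OF this] obtain bs where bs0: "\<forall>n. bs n \<in> Gstar - U \<and> Dc a (bs n) < 1 / Suc n" by blast
  have bs: "\<And>n. bs n \<in> Gstar - U" "\<And>n. Dc a (bs n) < 1 / Suc n" using bs0 by auto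
  have "(\<lambda>n. Dc (bs n) a) \<longlonglongrightarrow> 0"
  proof (rule Lim_null_comparison)
    show "eventually (\<lambda>n. norm (Dc (bs n) a) \<le> 1 / Suc n) sequentially"
    proof (rule always_eventually, rule allI)
      fix n show "norm (Dc (bs n) a) \<le> 1 / Suc n"
        using bs(2)[of n] Dc_sym[of a "bs n"] Dc_ge0[of "bs n" a] by simp
    qed
    show "(\<lambda>n. 1 / real (Suc n)) \<longlonglongrightarrow> 0" by (rule LIMSEQ_inverse_real_of_nat[unfolded inverse_eq_divide])
  qed
  then have "Gconv bs a" using Dc_Gconv bs(1) aG by blast
  then have "eventually (\<lambda>n. bs n \<in> U) sequentially"
    using U a bs(1) aG unfolding openin_Gtop seq_open_def by blast
  then show False using bs(1) by (auto dest: eventually_happens)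
qed

definition gU :: "('y::metric_space) rg set set \<Rightarrow> nat \<Rightarrow> 'y rg set \<Rightarrow> real" where
  "gU U n a = min 1 (real n * fU U a)"

lemma gU_seqc:
  fixes U :: "('y::metric_space) rg set set"
  shows "seqc (gU U k)"
  unfolding seqc_def gU_def
proof (intro allI impI)
  fix cs :: "nat \<Rightarrow> 'y rg set" and c assume "\<forall>n. cs n \<in> Gstar" "c \<in> Gstar" "Gconv cs c"
  then have "(\<lambda>n. fU U (cs n)) \<longlonglongrightarrow> fU U c" using fU_seqc[of U] unfolding seqc_def by blast
  then show "(\<lambda>n. min 1 (real k * fU U (cs n))) \<longlonglongrightarrow> min 1 (real k * fU U c)"
    by (intro tendsto_min tendsto_const tendsto_mult)
qed

lemma gU_cont: "continuous_map Gtop euclideanreal (gU U n)"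
  by (rule seqc_cont[OF gU_seqc])

lemma gU_bounds: "0 \<le> gU U n a" "gU U n a \<le> 1"
  unfolding gU_def using fU_ge0[of U a] by auto

lemma gU_bounded: "bounded (gU U n ` S)"
proof -
  have "\<forall>x\<in>gU U n ` S. norm x \<le> 1"
  proof
    fix x assume "x \<in> gU U n ` S"
    then obtain a where "x = gU U n a" by blast
    then show "norm x \<le> 1" using gU_bounds[of U n a] by simp
  qed
  then show ?thesis unfolding bounded_iff by blast
qed

lemma SUP_gU:
  assumes U: "openin Gtop U" and a: "a \<in> Gstar"
  shows "(SUP n. ennreal (gU U n a)) = indicator U a"
proof (cases "a \<in> U")
  case True
  have pos: "0 < fU U a" using fU_pos U True by blast
  have "(SUP n. ennreal (gU U n a)) = 1"
  proof (rule antisym)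
    show "(SUP n. ennreal (gU U n a)) \<le> 1" using gU_bounds by (auto intro!: SUP_least)
    obtain n :: nat where n: "1 / fU U a \<le> n" using real_nat_ceiling_ge by blast
    then have "1 \<le> real n * fU U a" using pos by (simp add: field_simps)
    then have "gU U n a = 1" unfolding gU_def by simp
    then show "1 \<le> (SUP n. ennreal (gU U n a))" by (metis ennreal_1 SUP_upper UNIV_I)
  qed
  then show ?thesis using True by simp
next
  case False
  then show ?thesis using fU_zero[OF a False] by (simp add: gU_def)
qed

lemma emeasure_open_SUP:
  fixes Q :: "('y::metric_space) rg set measure"
  assumes Q: "finite_measure Q" "sets Q = sets (borel_of Gtop)" and U: "openin Gtop U"
  shows "emeasure Q U = (SUP n. ennreal (\<integral>x. gU U n x \<partial>Q))"
proof -
  have spQ: "space Q = Gstar" using sets_eq_imp_space_eq[OF Q(2)] by (simp add: space_borel_of topspace_Gtop)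
  have Us: "U \<in> sets Q" using Q(2) openin_borel_of[OF U] by simp
  have meas: "gU U n \<in> borel_measurable Q" for n
    using cont_measurable[OF gU_cont] measurable_cong_sets[OF Q(2) refl] by blast
  have int: "integrable Q (gU U n)" for n
  proof -
    interpret finite_measure Q by (rule Q(1))
    have "AE x in Q. norm (gU U n x) \<le> 1"
      using gU_bounds[of U n] by (intro always_eventually allI) (metis abs_of_nonneg real_norm_def)
    then show ?thesis by (rule integrable_const_bound[where B=1]) (rule meas)
  qed
  have "emeasure Q U = (\<integral>\<^sup>+x. indicator U x \<partial>Q)" using Us by simp
  also have "\<dots> = (\<integral>\<^sup>+x. (SUP n. ennreal (gU U n x)) \<partial>Q)"
    by (rule nn_integral_cong) (simp add: SUP_gU[OF U] spQ)
  also have "\<dots> = (SUP n. \<integral>\<^sup>+x. ennreal (gU U n x) \<partial>Q)"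
  proof (rule nn_integral_monotone_convergence_SUP)
    show "incseq (\<lambda>n x. ennreal (gU U n x))"
      unfolding incseq_def le_fun_def gU_def
      using fU_ge0 by (auto intro!: ennreal_leI min.mono mult_right_mono)
    show "\<And>i. (\<lambda>x. ennreal (gU U i x)) \<in> borel_measurable Q" using meas by measurable
  qed
  also have "\<dots> = (SUP n. ennreal (\<integral>x. gU U n x \<partial>Q))"
  proof -
    have "\<And>n. (\<integral>\<^sup>+x. ennreal (gU U n x) \<partial>Q) = ennreal (\<integral>x. gU U n x \<partial>Q)"
    proof -
      fix n
      have "AE x in Q. 0 \<le> gU U n x" by (rule always_eventually) (simp add: gU_bounds)
      then show "(\<integral>\<^sup>+x. ennreal (gU U n x) \<partial>Q) = ennreal (\<integral>x. gU U n x \<partial>Q)"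
        using nn_integral_eq_integral[OF int] by blast
    qed
    then show ?thesis by simp
  qed
  finally show ?thesis .
qed

lemma measure_det:
  fixes Q1 Q2 :: "('y::metric_space) rg set measure"
  assumes Q1: "finite_measure Q1" "sets Q1 = sets (borel_of Gtop)"
    and Q2: "finite_measure Q2" "sets Q2 = sets (borel_of Gtop)"
    and eq: "\<And>\<phi>. continuous_map Gtop euclideanreal \<phi> \<Longrightarrow> bounded (\<phi> ` topspace Gtop) \<Longrightarrow>
                (\<integral>z. \<phi> z \<partial>Q1) = (\<integral>z. \<phi> z \<partial>Q2)"
  shows "Q1 = Q2"
proof (rule measure_eqI_generator_eq[where E="{U. openin Gtop U}" and \<Omega>=Gstar and A="\<lambda>_. Gstar"])
  show "Int_stable {U. openin Gtop U}" by (auto simp: Int_stable_def)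
  show "{U. openin Gtop U} \<subseteq> Pow Gstar" using openin_subset topspace_Gtop by auto
  show "\<And>X. X \<in> {U. openin Gtop U} \<Longrightarrow> emeasure Q1 X = emeasure Q2 X"
  proof -
    fix X :: "'y rg set set" assume "X \<in> {U. openin Gtop U}"
    then have X: "openin Gtop X" by simp
    have "\<And>n. (\<integral>x. gU X n x \<partial>Q1) = (\<integral>x. gU X n x \<partial>Q2)"
      using eq[OF gU_cont gU_bounded] .
    then show "emeasure Q1 X = emeasure Q2 X"
      using emeasure_open_SUP[OF Q1 X] emeasure_open_SUP[OF Q2 X] by simp
  qed
  show "sets Q1 = sigma_sets Gstar {U. openin Gtop U}" using Q1 sets_borel_of topspace_Gtop by metis
  show "sets Q2 = sigma_sets Gstar {U. openin Gtop U}" using Q2 sets_borel_of topspace_Gtop by metis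
  show "range (\<lambda>_. Gstar) \<subseteq> {U. openin Gtop U}" using openin_topspace[of Gtop] unfolding topspace_Gtop by auto
  show "(\<Union>i. Gstar) = Gstar" by simp
  show "\<And>i. emeasure Q1 Gstar \<noteq> \<infinity>" using finite_measure.emeasure_finite[OF Q1(1)] by (simp add: infinity_ennreal_def)
qed

lemma kernel_measurable:
  fixes K :: "'a \<Rightarrow> ('y::metric_space) rg set measure"
  assumes prob: "\<And>c. c \<in> space M \<Longrightarrow> prob_space (K c)"
    and sets: "\<And>c. c \<in> space M \<Longrightarrow> sets (K c) = sets (borel_of Gtop)"
    and meas: "\<And>\<phi>. continuous_map Gtop euclideanreal \<phi> \<Longrightarrow> bounded (\<phi> ` topspace Gtop) \<Longrightarrow>
                (\<lambda>c. \<integral>z. \<phi> z \<partial>K c) \<in> borel_measurable M"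
  shows "K \<in> measurable M (prob_algebra (borel_of Gtop))"
proof (rule measurable_prob_algebra_generated[where G="{U. openin Gtop U}" and \<Omega>=Gstar])
  show "sets (borel_of Gtop) = sigma_sets Gstar {U. openin Gtop U}" using sets_borel_of topspace_Gtop by metis
  show "Int_stable {U. openin Gtop U}" by (auto simp: Int_stable_def)
  show "{U. openin Gtop U} \<subseteq> Pow Gstar" using openin_subset topspace_Gtop by auto
  show "\<And>a. a \<in> space M \<Longrightarrow> prob_space (K a)" by (rule prob)
  show "\<And>a. a \<in> space M \<Longrightarrow> sets (K a) = sets (borel_of Gtop)" by (rule sets)
  fix A :: "'y rg set set" assume A: "A \<in> {U. openin Gtop U}"
  have "(\<lambda>c. SUP n. ennreal (\<integral>x. gU A n x \<partial>K c)) \<in> borel_measurable M"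
    using meas[OF gU_cont gU_bounded] by measurable
  moreover have "\<And>c. c \<in> space M \<Longrightarrow> emeasure (K c) A = (SUP n. ennreal (\<integral>x. gU A n x \<partial>K c))"
    using emeasure_open_SUP prob sets A prob_space.finite_measure by blast
  ultimately show "(\<lambda>a. emeasure (K a) A) \<in> borel_measurable M"
    by (subst measurable_cong) auto
qed

lemma openin_mset_topology: "openin (mset_topology T) U \<longleftrightarrow> mset_open T U"
  unfolding mset_topology_def using istopology_mset_open topology_inverse' by metis

lemma topspace_mset_topology: "topspace (mset_topology T) = {M. set_mset M \<subseteq> topspace T}"
proof
  show "topspace (mset_topology T) \<subseteq> {M. set_mset M \<subseteq> topspace T}"
    unfolding topspace_def openin_mset_topology mset_open_def by blast
  have "mset_open T {M. set_mset M \<subseteq> topspace T}"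
    unfolding mset_open_def
  proof (intro conjI allI)
    fix m
    have "{f \<in> topspace (pow_top T m). mset (map f [0..<m]) \<in> {M. set_mset M \<subseteq> topspace T}}
          = topspace (pow_top T m)"
    proof (rule set_eqI, rule iffI)
      fix f assume "f \<in> topspace (pow_top T m)"
      then have "\<And>i. i < m \<Longrightarrow> f i \<in> topspace T" by (simp add: topspace_product_topology PiE_iff)
      then have "set_mset (mset (map f [0..<m])) \<subseteq> topspace T" by auto
      then show "f \<in> {f \<in> topspace (pow_top T m). mset (map f [0..<m]) \<in> {M. set_mset M \<subseteq> topspace T}}"
        using \<open>f \<in> topspace (pow_top T m)\<close> by blast
    qed blast
    note eq = this
    show "openin (pow_top T m) {f \<in> topspace (pow_top T m). mset (map f [0..<m]) \<in> {M. set_mset M \<subseteq> topspace T}}"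
      unfolding eq by (rule openin_topspace)
  qed simp
  then show "{M. set_mset M \<subseteq> topspace T} \<subseteq> topspace (mset_topology T)"
    using openin_subset openin_mset_topology by metis
qed

lemma cont_qmap: "continuous_map (pow_top T m) (mset_topology T) (\<lambda>f. mset (map f [0..<m]))"
  unfolding continuous_map_def
proof (intro conjI allI impI)
  show "(\<lambda>f. mset (map f [0..<m])) \<in> topspace (pow_top T m) \<rightarrow> topspace (mset_topology T)"
  proof
    fix f assume "f \<in> topspace (pow_top T m)"
    then have "\<And>i. i < m \<Longrightarrow> f i \<in> topspace T" by (simp add: topspace_product_topology PiE_iff)
    then have "set_mset (mset (map f [0..<m])) \<subseteq> topspace T" by auto
    then show "mset (map f [0..<m]) \<in> topspace (mset_topology T)" by (simp add: topspace_mset_topology)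
  qed
  fix U assume "openin (mset_topology T) U"
  then show "openin (pow_top T m) {f \<in> topspace (pow_top T m). mset (map f [0..<m]) \<in> U}"
    unfolding openin_mset_topology mset_open_def by blast
qed

lemma nbr_eq:
  assumes g: "valid_rg (V, E, r, x)" and h: "valid_rg (V', E', r', x')"
    and iso: "ball_iso (V, E, r, x) (V', E', r', x') (Suc k) \<psi>" and w: "w \<in> gball V E r k"
  shows "{u \<in> V'. E' (\<psi> w) u} = \<psi> ` {u \<in> V. E w u}" and "inj_on \<psi> {u \<in> V. E w u}"
proof -
  have bij: "bij_betw \<psi> (gball V E r (Suc k)) (gball V' E' r' (Suc k))"
    using iso unfolding ball_iso_simp by (rule conjunct1)
  have ed: "\<forall>u \<in> gball V E r (Suc k). \<forall>v \<in> gball V E r (Suc k). E u v \<longleftrightarrow> E' (\<psi> u) (\<psi> v)"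
    using iso unfolding ball_iso_simp by (rule conjunct2[THEN conjunct2])
  have imk: "\<psi> ` gball V E r k = gball V' E' r' k" using ball_iso_image[OF g h iso] by simp
  have wS: "w \<in> gball V E r (Suc k)" using w by simp
  have NS: "{u \<in> V. E w u} \<subseteq> gball V E r (Suc k)" using w by auto
  have V'S: "gball V' E' r' (Suc k) \<subseteq> V'" using gball_subset valid_rgD(1)[OF h] by blast
  have injS: "inj_on \<psi> (gball V E r (Suc k))" and imS: "\<psi> ` gball V E r (Suc k) = gball V' E' r' (Suc k)"
    using bij unfolding bij_betw_def by auto
  show "inj_on \<psi> {u \<in> V. E w u}" using injS NS by (rule inj_on_subset)
  show "{u \<in> V'. E' (\<psi> w) u} = \<psi> ` {u \<in> V. E w u}"
  proof
    show "{u \<in> V'. E' (\<psi> w) u} \<subseteq> \<psi> ` {u \<in> V. E w u}"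
    proof
      fix u' assume u': "u' \<in> {u \<in> V'. E' (\<psi> w) u}"
      have "\<psi> w \<in> gball V' E' r' k" using imk w by blast
      then have "u' \<in> gball V' E' r' (Suc k)" using u' by auto
      then obtain u where u: "u \<in> gball V E r (Suc k)" "u' = \<psi> u" using imS by (metis imageE)
      then have "E w u" using ed wS u' by blast
      then have "u \<in> V" using valid_rgD(3)[OF g] by blast
      then show "u' \<in> \<psi> ` {u \<in> V. E w u}" using u \<open>E w u\<close> by blast
    qed
  next
    show "\<psi> ` {u \<in> V. E w u} \<subseteq> {u \<in> V'. E' (\<psi> w) u}"
    proof
      fix u' assume "u' \<in> \<psi> ` {u \<in> V. E w u}"
      then obtain u where u: "u \<in> V" "E w u" "u' = \<psi> u" by blast
      have uS: "u \<in> gball V E r (Suc k)" using u w by auto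
      then have "E' (\<psi> w) u'" using ed wS u by blast
      moreover have "u' \<in> V'" using uS imS V'S u by blast
      ultimately show "u' \<in> {u \<in> V'. E' (\<psi> w) u}" by blast
    qed
  qed
qed

lemma mset_nbr_list:
  assumes "finite N" "inj_on \<psi> N"
  shows "image_mset h (mset_set (\<psi> ` N)) =
         mset (map (\<lambda>i. h (\<psi> (sorted_list_of_set N ! i))) [0..<card N])"
proof -
  let ?L = "sorted_list_of_set N"
  have "mset_set (\<psi> ` N) = image_mset \<psi> (mset_set N)" using image_mset_mset_set[OF assms(2)] by simp
  then have "image_mset h (mset_set (\<psi> ` N)) = image_mset (h \<circ> \<psi>) (mset ?L)"
  proof -
    have "mset_set N = mset ?L" using assms(1) by (metis mset_set_set distinct_sorted_list_of_set set_sorted_list_of_set)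
    then show ?thesis using \<open>mset_set (\<psi> ` N) = image_mset \<psi> (mset_set N)\<close> by (simp add: multiset.map_comp)
  qed
  also have "\<dots> = mset (map (h \<circ> \<psi>) ?L)" by simp
  also have "map (h \<circ> \<psi>) ?L = map (\<lambda>i. h (\<psi> (?L ! i))) [0..<card N]"
  proof -
    have "?L = map (\<lambda>i. ?L ! i) [0..<length ?L]" by (rule map_nth[symmetric])
    then have "map (h \<circ> \<psi>) ?L = map (h \<circ> \<psi>) (map (\<lambda>i. ?L ! i) [0..<length ?L])" by metis
    then show ?thesis using assms(1) by simp
  qed
  finally show ?thesis .
qed

lemma limitin_hist:
  assumes "\<And>i. i \<le> j \<Longrightarrow> ((\<lambda>n. f n i) \<longlongrightarrow> l i) sequentially"
  shows "limitin (hist_top j) (\<lambda>n. restrict (f n) {..j}) (restrict l {..j}) sequentially"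
  unfolding limitin_componentwise
  using assms by (auto simp: topspace_product_topology PiE_iff)

lemma traj_conv:
  fixes F :: "nat \<Rightarrow> (nat \<Rightarrow> 'x::metric_space) \<Rightarrow> (nat \<Rightarrow> 'x) multiset \<Rightarrow> 'e::topological_space \<Rightarrow> 'x"
  assumes F_cont: "\<And>k. continuous_map
        (prod_topology (hist_top k) (prod_topology (mset_topology (hist_top k)) (euclidean :: 'e topology)))
        (euclidean :: 'x topology) (\<lambda>(a, m, e). F k a m e)"
    and g: "valid_rg (V, E, r, x)"
    and gs: "\<And>n. valid_rg (Vn n, En n, rn n, xn n)"
    and iso: "\<And>k. eventually (\<lambda>n. ball_iso (V, E, r, x) (Vn n, En n, rn n, xn n) k (\<psi> n)) sequentially"
    and marks: "\<And>w. w \<in> V \<Longrightarrow> (\<lambda>n. xn n (\<psi> n w)) \<longlonglongrightarrow> x w"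
    and noise: "\<And>w j. w \<in> V \<Longrightarrow> (\<lambda>n. \<xi>n n (\<psi> n w, j)) \<longlonglongrightarrow> \<xi> (w, j)"
  shows "w \<in> V \<Longrightarrow> (\<lambda>n. traj F (Vn n) (En n) (xn n) (\<xi>n n) j (\<psi> n w) i) \<longlonglongrightarrow> traj F V E x \<xi> j w i"
proof (induction j arbitrary: w i)
  case 0
  then show ?case using marks by simp
next
  case (Suc j)
  let ?Tn = "\<lambda>n. traj F (Vn n) (En n) (xn n) (\<xi>n n) j"
  let ?T = "traj F V E x \<xi> j"
  have hA: "limitin (hist_top j) (\<lambda>n. restrict (?Tn n (\<psi> n u)) {..j}) (restrict (?T u) {..j}) sequentially"
    if u: "u \<in> V" for u
    by (rule limitin_hist) (rule Suc.IH[OF u])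
  show ?case
  proof (cases "i = Suc j")
    case False
    then show ?thesis using Suc.IH[OF Suc.prems] by simp
  next
    case True
    define N where "N = {u \<in> V. E w u}"
    have finN: "finite N" unfolding N_def
      using valid_rgD(6)[OF g Suc.prems] by (auto intro: finite_subset)
    have NV: "N \<subseteq> V" unfolding N_def by blast
    define L where "L = sorted_list_of_set N"
    define m where "m = card N"
    have Lm: "\<And>i. i < m \<Longrightarrow> L ! i \<in> N"
      unfolding L_def m_def using finN by (metis length_sorted_list_of_set nth_mem set_sorted_list_of_set)
    define fn where "fn = (\<lambda>n. restrict (\<lambda>i. restrict (?Tn n (\<psi> n (L ! i))) {..j}) {..<m})"
    define fi where "fi = restrict (\<lambda>i. restrict (?T (L ! i)) {..j}) {..<m}"
    let ?q = "\<lambda>f. mset (map f [0..<m])"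
    let ?Mn = "\<lambda>n. image_mset (\<lambda>u. restrict (?Tn n u) {..j}) (mset_set {u \<in> Vn n. En n (\<psi> n w) u})"
    let ?M = "image_mset (\<lambda>u. restrict (?T u) {..j}) (mset_set {u \<in> V. E w u})"
    have lim_fn: "limitin (pow_top (hist_top j) m) fn fi sequentially"
    proof -
      have c1: "fi \<in> extensional {..<m}" unfolding fi_def by simp
      have c2: "\<forall>\<^sub>F n in sequentially. fn n \<in> topspace (pow_top (hist_top j) m)"
        unfolding fn_def by (auto simp: topspace_product_topology PiE_iff)
      have c3: "\<forall>i\<in>{..<m}. limitin (hist_top j) (\<lambda>n. fn n i) (fi i) sequentially"
      proof
        fix i assume i: "i \<in> {..<m}"
        then have "L ! i \<in> V" using Lm NV by auto
        then show "limitin (hist_top j) (\<lambda>n. fn n i) (fi i) sequentially"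
          unfolding fn_def fi_def using hA i by simp
      qed
      show ?thesis by (rule limitin_componentwise[THEN iffD2]) (use c1 c2 c3 in blast)
    qed
    have lim_q: "limitin (mset_topology (hist_top j)) (?q \<circ> fn) (?q fi) sequentially"
      by (rule continuous_map_limit[OF cont_qmap lim_fn])
    have M_eq: "?M = ?q fi"
    proof -
      have "?M = image_mset (\<lambda>u. restrict (?T u) {..j}) (mset_set (id ` N))" unfolding N_def by simp
      also have "\<dots> = mset (map (\<lambda>i. restrict (?T (id (L ! i))) {..j}) [0..<m])"
        unfolding L_def m_def by (rule mset_nbr_list[OF finN]) simp
      also have "\<dots> = ?q fi" unfolding fi_def by (intro arg_cong[where f=mset] map_cong) auto
      finally show ?thesis .
    qed
    obtain k0 where k0: "w \<in> gball V E r k0" using valid_rgD(7)[OF g] Suc.prems by blast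
    have ev: "eventually (\<lambda>n. ?Mn n = (?q \<circ> fn) n) sequentially"
      using iso[of "Suc k0"]
    proof (rule eventually_mono)
      fix n assume isn: "ball_iso (V, E, r, x) (Vn n, En n, rn n, xn n) (Suc k0) (\<psi> n)"
      have e1: "{u \<in> Vn n. En n (\<psi> n w) u} = \<psi> n ` N" and inj: "inj_on (\<psi> n) N"
        using nbr_eq[OF g gs isn k0] unfolding N_def by auto
      have "?Mn n = image_mset (\<lambda>u. restrict (?Tn n u) {..j}) (mset_set (\<psi> n ` N))" using e1 by simp
      also have "\<dots> = mset (map (\<lambda>i. restrict (?Tn n (\<psi> n (L ! i))) {..j}) [0..<m])"
        unfolding L_def m_def by (rule mset_nbr_list[OF finN inj])
      also have "\<dots> = (?q \<circ> fn) n" unfolding fn_def o_def by (intro arg_cong[where f=mset] map_cong) auto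
      finally show "?Mn n = (?q \<circ> fn) n" .
    qed
    have lim_M: "limitin (mset_topology (hist_top j)) ?Mn ?M sequentially"
    proof -
      have ev': "eventually (\<lambda>n. (?q \<circ> fn) n = ?Mn n) sequentially"
        using ev by (rule eventually_mono) (rule sym)
      show ?thesis unfolding M_eq by (rule limitin_transform_eventually[OF ev' lim_q])
    qed
    have lim_e: "limitin euclidean (\<lambda>n. \<xi>n n (\<psi> n w, Suc j)) (\<xi> (w, Suc j)) sequentially"
      using noise[OF Suc.prems] by simp
    have lim_all: "limitin (prod_topology (hist_top j) (prod_topology (mset_topology (hist_top j)) euclidean))
        (\<lambda>n. (restrict (?Tn n (\<psi> n w)) {..j}, ?Mn n, \<xi>n n (\<psi> n w, Suc j)))
        (restrict (?T w) {..j}, ?M, \<xi> (w, Suc j)) sequentially"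
      unfolding limitin_pairwise using hA[OF Suc.prems] lim_M lim_e by (simp add: o_def)
    have "limitin euclidean ((\<lambda>(a, m, e). F j a m e) \<circ>
        (\<lambda>n. (restrict (?Tn n (\<psi> n w)) {..j}, ?Mn n, \<xi>n n (\<psi> n w, Suc j))))
        ((\<lambda>(a, m, e). F j a m e) (restrict (?T w) {..j}, ?M, \<xi> (w, Suc j))) sequentially"
      by (rule continuous_map_limit[OF F_cont lim_all])
    then show ?thesis using True by (simp add: o_def)
  qed
qed

lemma valid_marks: "valid_rg (V, E, r, y) = valid_rg (V, E, r, z)"
  by (simp add: valid_rg_def)

lemma ball_iso_marks: "ball_iso (V, E, r, y) (V', E', r', y') k \<phi> = ball_iso (V, E, r, z) (V', E', r', z') k \<phi>"
  by (simp add: ball_iso_simp)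

lemma in_own_class: "valid_rg g \<Longrightarrow> g \<in> rg_class g"
  unfolding rg_class_def rg_iso_def by (cases g) (auto intro!: exI[of _ id])

lemma class_Gstar: "valid_rg g \<Longrightarrow> rg_class g \<in> Gstar"
  unfolding Gstar_def by blast

lemma fun_tendsto_iff:
  fixes f :: "'a \<Rightarrow> ('i \<Rightarrow> 'b::topological_space)"
  shows "(f \<longlongrightarrow> l) F \<longleftrightarrow> (\<forall>i. ((\<lambda>n. f n i) \<longlongrightarrow> l i) F)"
proof -
  have "(f \<longlongrightarrow> l) F \<longleftrightarrow> limitin (product_topology (\<lambda>i. euclidean) UNIV) f l F"
    by (simp add: euclidean_product_topology)
  also have "\<dots> \<longleftrightarrow> (\<forall>i. ((\<lambda>n. f n i) \<longlongrightarrow> l i) F)"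
    by (subst limitin_componentwise) simp
  finally show ?thesis .
qed

lemma proc_Gconv:
  fixes F :: "nat \<Rightarrow> (nat \<Rightarrow> 'x::metric_space) \<Rightarrow> (nat \<Rightarrow> 'x) multiset \<Rightarrow> 'e::topological_space \<Rightarrow> 'x"
  assumes F_cont: "\<And>k. continuous_map
        (prod_topology (hist_top k) (prod_topology (mset_topology (hist_top k)) (euclidean :: 'e topology)))
        (euclidean :: 'x topology) (\<lambda>(a, m, e). F k a m e)"
    and g: "valid_rg (V, E, r, x)"
    and gs: "\<And>n. valid_rg (Vn n, En n, rn n, xn n)"
    and iso: "\<And>k. eventually (\<lambda>n. ball_iso (V, E, r, x) (Vn n, En n, rn n, xn n) k (\<psi> n)) sequentially"
    and marks: "\<And>w. w \<in> V \<Longrightarrow> (\<lambda>n. xn n (\<psi> n w)) \<longlonglongrightarrow> x w"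
    and noise: "\<And>w j. w \<in> V \<Longrightarrow> (\<lambda>n. \<xi>n n (\<psi> n w, j)) \<longlonglongrightarrow> \<xi> (w, j)"
  shows "Gconv (\<lambda>n. rg_class (Vn n, En n, rn n, proc F (Vn n) (En n) (xn n) (\<xi>n n)))
               (rg_class (V, E, r, proc F V E x \<xi>))"
proof -
  let ?P = "\<lambda>n. proc F (Vn n) (En n) (xn n) (\<xi>n n)"
  let ?Q = "proc F V E x \<xi>"
  have conv: "(\<lambda>n. ?P n (\<psi> n w)) \<longlonglongrightarrow> ?Q w" if w: "w \<in> V" for w
    unfolding fun_tendsto_iff proc_def
    using traj_conv[where F=F and V=V and E=E and r=r and x=x and Vn=Vn and En=En and rn=rn and xn=xn
        and \<psi>=\<psi> and \<xi>n=\<xi>n and \<xi>=\<xi>, OF F_cont g gs iso marks noise w] by blast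
  have v1: "valid_rg (V, E, r, ?Q)" using valid_marks[THEN iffD1, OF g] .
  have v2: "valid_rg (Vn n, En n, rn n, ?P n)" for n using valid_marks[THEN iffD1, OF gs] .
  have "rg_conv (\<lambda>n. (Vn n, En n, rn n, ?P n)) (V, E, r, ?Q)"
    unfolding rg_conv_def
  proof (intro allI impI)
    fix k :: nat and \<epsilon> :: real assume \<epsilon>: "\<epsilon> > 0"
    have fin: "finite (gball V E r k)" using gball_finite[OF g] .
    have ev1: "eventually (\<lambda>n. \<forall>w\<in>gball V E r k. dist (?P n (\<psi> n w)) (?Q w) < \<epsilon>) sequentially"
    proof (rule eventually_ball_finite[OF fin], rule ballI)
      fix w assume "w \<in> gball V E r k"
      then have "w \<in> V" using gball_subset valid_rgD(1)[OF g] by blast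
      then show "eventually (\<lambda>n. dist (?P n (\<psi> n w)) (?Q w) < \<epsilon>) sequentially"
        using tendstoD[OF conv \<epsilon>] by blast
    qed
    have ev: "eventually (\<lambda>n. (\<forall>w\<in>gball V E r k. dist (?P n (\<psi> n w)) (?Q w) < \<epsilon>) \<and>
                 ball_iso (V, E, r, x) (Vn n, En n, rn n, xn n) k (\<psi> n)) sequentially"
      using ev1 iso[of k] by (rule eventually_conj)
    obtain N where H: "\<forall>n\<ge>N. (\<forall>w\<in>gball V E r k. dist (?P n (\<psi> n w)) (?Q w) < \<epsilon>) \<and>
                 ball_iso (V, E, r, x) (Vn n, En n, rn n, xn n) k (\<psi> n)"
      using ev unfolding eventually_sequentially by blast
    have main: "\<exists>\<phi>. ball_iso (Vn n, En n, rn n, ?P n) (V, E, r, ?Q) k \<phi> \<and>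
        (\<forall>v \<in> gball (Vn n) (En n) (rn n) k. dist (?P n v) (?Q (\<phi> v)) < \<epsilon>)" if n: "N \<le> n" for n
    proof -
      have d: "\<forall>w\<in>gball V E r k. dist (?P n (\<psi> n w)) (?Q w) < \<epsilon>" using H n by blast
      have bi: "ball_iso (V, E, r, ?Q) (Vn n, En n, rn n, ?P n) k (\<psi> n)"
        by (rule ball_iso_marks[THEN iffD1]) (use H n in blast)
      let ?\<phi> = "inv_into (gb (V, E, r, ?Q) k) (\<psi> n)"
      have "ball_iso (Vn n, En n, rn n, ?P n) (V, E, r, ?Q) k ?\<phi>" by (rule ball_iso_inv(1)[OF bi])
      moreover have "\<forall>v \<in> gball (Vn n) (En n) (rn n) k. dist (?P n v) (?Q (?\<phi> v)) < \<epsilon>"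
      proof
        fix v assume "v \<in> gball (Vn n) (En n) (rn n) k"
        then have "?\<phi> v \<in> gball V E r k" "\<psi> n (?\<phi> v) = v" using ball_iso_inv(2)[OF bi, of v] by auto
        then show "dist (?P n v) (?Q (?\<phi> v)) < \<epsilon>" using d by metis
      qed
      ultimately show ?thesis by blast
    qed
    show "\<exists>N. \<forall>n\<ge>N. \<exists>\<phi>. ball_iso (Vn n, En n, rn n, ?P n) (V, E, r, ?Q) k \<phi> \<and>
        (\<forall>v \<in> (case (Vn n, En n, rn n, ?P n) of (V, E, r, y) \<Rightarrow> gball V E r k).
            dist ((snd (snd (snd (Vn n, En n, rn n, ?P n)))) v) ((snd (snd (snd (V, E, r, ?Q)))) (\<phi> v)) < \<epsilon>)"
    proof (rule exI[of _ N], intro allI impI)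
      fix n assume "N \<le> n"
      from main[OF this] show "\<exists>\<phi>. ball_iso (Vn n, En n, rn n, ?P n) (V, E, r, ?Q) k \<phi> \<and>
        (\<forall>v \<in> (case (Vn n, En n, rn n, ?P n) of (V, E, r, y) \<Rightarrow> gball V E r k).
            dist ((snd (snd (snd (Vn n, En n, rn n, ?P n)))) v) ((snd (snd (snd (V, E, r, ?Q)))) (\<phi> v)) < \<epsilon>)"
        by (simp only: prod.case snd_conv)
    qed
  qed
  then show ?thesis unfolding Gconv_def
    by (intro exI[of _ "\<lambda>n. (Vn n, En n, rn n, ?P n)"] exI[of _ "(V, E, r, ?Q)"] conjI allI)
       (auto intro: in_own_class[OF v1] in_own_class[OF v2])
qed


lemma class_proc_Gstar: "valid_rg (V, E, r, x) \<Longrightarrow> rg_class (V, E, r, y) \<in> Gstar"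
  using class_Gstar valid_marks by metis

lemma Phi_meas:
  fixes F :: "nat \<Rightarrow> (nat \<Rightarrow> 'x::metric_space) \<Rightarrow> (nat \<Rightarrow> 'x) multiset \<Rightarrow> 'e::polish_space \<Rightarrow> 'x"
    and \<nu> :: "'e measure"
  assumes noise_borel: "sets \<nu> = sets (borel :: 'e measure)"
    and F_cont: "\<And>k. continuous_map
        (prod_topology (hist_top k) (prod_topology (mset_topology (hist_top k)) (euclidean :: 'e topology)))
        (euclidean :: 'x topology) (\<lambda>(a, m, e). F k a m e)"
    and g: "valid_rg (V, E, r, x)"
  shows "(\<lambda>\<xi>. rg_class (V, E, r, proc F V E x \<xi>)) \<in> measurable (Pi\<^sub>M UNIV (\<lambda>_. \<nu>)) (borel_of Gtop)"
proof -
  let ?f = "\<lambda>\<xi>. rg_class (V, E, r, proc F V E x \<xi>)"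
  have "sets (Pi\<^sub>M UNIV (\<lambda>_. \<nu>)) = sets (Pi\<^sub>M UNIV (\<lambda>_::nat\<times>nat. borel::'e measure))"
    by (rule sets_PiM_cong) (simp_all add: noise_borel)
  also have "\<dots> = sets (borel :: (nat \<times> nat \<Rightarrow> 'e) measure)" by (rule sets_PiM_equal_borel)
  finally have s: "sets (Pi\<^sub>M UNIV (\<lambda>_. \<nu>)) = sets (borel :: (nat \<times> nat \<Rightarrow> 'e) measure)" .
  have op: "open (?f -` U)" if U: "openin Gtop U" for U
  proof -
    have "closed (- (?f -` U))"
      unfolding closed_sequential_limits
    proof (intro allI impI)
      fix xs l assume h: "(\<forall>n. xs n \<in> - (?f -` U)) \<and> xs \<longlonglongrightarrow> l"
      show "l \<in> - (?f -` U)"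
      proof
        assume lU: "l \<in> ?f -` U"
        have pw: "(\<lambda>n. xs n (w, j)) \<longlonglongrightarrow> l (w, j)" for w j
          using h fun_tendsto_iff by blast
        have "Gconv (\<lambda>n. rg_class (V, E, r, proc F V E x (xs n))) (rg_class (V, E, r, proc F V E x l))"
          by (rule proc_Gconv[where \<psi>="\<lambda>_. id", OF F_cont g g])
             (auto simp: ball_iso_simp pw)
        moreover have "\<forall>n. ?f (xs n) \<in> Gstar" "?f l \<in> Gstar" using class_proc_Gstar[OF g] by auto
        moreover have sq2: "\<And>a b. (\<forall>n. a n \<in> Gstar) \<Longrightarrow> b \<in> Gstar \<Longrightarrow> Gconv a b \<Longrightarrow> b \<in> U \<Longrightarrow>
            eventually (\<lambda>n. a n \<in> U) sequentially"
          using U unfolding openin_Gtop seq_open_def by blast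
        ultimately have "eventually (\<lambda>n. ?f (xs n) \<in> U) sequentially"
          using sq2[of "\<lambda>n. ?f (xs n)" "?f l"] lU by simp
        then show False using h by (auto dest: eventually_happens)
      qed
    qed
    then show ?thesis by (simp add: closed_def)
  qed
  have "?f \<in> measurable (borel :: (nat \<times> nat \<Rightarrow> 'e) measure) (borel_of Gtop)"
    unfolding borel_of_def
  proof (rule measurable_measure_of)
    show "{U. openin Gtop U} \<subseteq> Pow (topspace Gtop)" using openin_subset by auto
    show "?f \<in> space borel \<rightarrow> topspace Gtop" using class_proc_Gstar[OF g] topspace_Gtop by auto
    fix U :: "(nat \<Rightarrow> 'x) rg set set" assume "U \<in> {U. openin Gtop U}"
    then show "?f -` U \<inter> space borel \<in> sets borel" using op by simp
  qed
  then show ?thesis using measurable_cong_sets[OF s refl] by blast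
qed

lemma diag:
  fixes Q :: "nat \<Rightarrow> nat \<Rightarrow> 'a \<Rightarrow> bool"
  assumes "\<And>k. \<exists>N. \<forall>n\<ge>N. \<exists>\<phi>. Q k n \<phi>"
  shows "\<exists>\<Phi> L. \<forall>k. eventually (\<lambda>n. k \<le> L n \<and> Q (L n) n (\<Phi> n)) sequentially"
proof -
  obtain N where N: "\<And>k n. n \<ge> N k \<Longrightarrow> \<exists>\<phi>. Q k n \<phi>" using assms by metis
  define Mx where "Mx k = Max (N ` {..k})" for k
  have NM: "N j \<le> Mx k" if "j \<le> k" for j k unfolding Mx_def using that by (intro Max_ge finite_imageI) auto
  define S where "S n = {k. k \<le> n \<and> Mx k \<le> n}" for n
  define L where "L n = (if S n = {} then 0 else Max (S n))" for n
  define \<Phi> where "\<Phi> n = (SOME \<phi>. Q (L n) n \<phi>)" for n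
  have "eventually (\<lambda>n. k \<le> L n \<and> Q (L n) n (\<Phi> n)) sequentially" for k
    unfolding eventually_sequentially
  proof (intro exI allI impI)
    fix n assume n: "max k (Mx k) \<le> n"
    have kS: "k \<in> S n" unfolding S_def using n by auto
    have fin: "finite (S n)" unfolding S_def by auto
    have LS: "L n \<in> S n" and kL: "k \<le> L n" unfolding L_def using kS fin by (auto intro: Max_ge)
    have "N (L n) \<le> n" using LS NM[of "L n" "L n"] unfolding S_def by auto
    then have "\<exists>\<phi>. Q (L n) n \<phi>" using N by blast
    then have "Q (L n) n (\<Phi> n)" unfolding \<Phi>_def by (rule someI_ex)
    then show "k \<le> L n \<and> Q (L n) n (\<Phi> n)" using kL by blast
  qed
  then show ?thesis by blast
qed

lemma extend_bij:
  fixes A B :: "nat set"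
  assumes "finite A" "finite B" "bij_betw f A B"
  shows "\<exists>\<sigma>. bij \<sigma> \<and> (\<forall>a\<in>A. \<sigma> a = f a)"
proof -
  obtain e1 :: "nat \<Rightarrow> nat" where e1: "bij_betw e1 (- A) UNIV"
  proof -
    have "countable (- A)" by (rule countableI_type)
    moreover have "infinite (- A)" using assms(1) by (metis finite_UnI Compl_partition infinite_UNIV_nat)
    ultimately show ?thesis using countableE_infinite that by blast
  qed
  obtain e2 :: "nat \<Rightarrow> nat" where e2: "bij_betw e2 (- B) UNIV"
  proof -
    have "countable (- B)" by (rule countableI_type)
    moreover have "infinite (- B)" using assms(2) by (metis finite_UnI Compl_partition infinite_UNIV_nat)
    ultimately show ?thesis using countableE_infinite that by blast
  qed
  let ?h = "inv_into (- B) e2 \<circ> e1"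
  have h: "bij_betw ?h (- A) (- B)" using bij_betw_trans[OF e1 bij_betw_inv_into[OF e2]] .
  define \<sigma> where "\<sigma> a = (if a \<in> A then f a else ?h a)" for a
  have b1: "bij_betw \<sigma> A B" using assms(3) by (rule bij_betw_cong[THEN iffD1, rotated]) (simp add: \<sigma>_def)
  have b2: "bij_betw \<sigma> (- A) (- B)" using h by (rule bij_betw_cong[THEN iffD1, rotated]) (simp add: \<sigma>_def)
  have "bij_betw \<sigma> (A \<union> - A) (B \<union> - B)" by (rule bij_betw_combine[OF b1 b2]) auto
  then have "bij \<sigma>" by simp
  then show ?thesis unfolding \<sigma>_def by auto
qed

lemma part1:
  fixes F :: "nat \<Rightarrow> (nat \<Rightarrow> 'x::polish_space) \<Rightarrow> (nat \<Rightarrow> 'x) multiset \<Rightarrow> 'e::polish_space \<Rightarrow> 'x"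
    and \<nu> :: "'e measure"
  assumes noise_prob: "prob_space \<nu>"
    and noise_borel: "sets \<nu> = sets (borel :: 'e measure)"
    and F_cont: "\<And>k. continuous_map
        (prod_topology (hist_top k) (prod_topology (mset_topology (hist_top k)) (euclidean :: 'e topology)))
        (euclidean :: 'x topology) (\<lambda>(a, m, e). F k a m e)"
    and gsv: "\<And>n. valid_rg (gs n)" and gv: "valid_rg g" and conv: "rg_conv gs g"
  shows "weak_conv_top Gtop (\<lambda>n. PGx F \<nu> (gs n)) (PGx F \<nu> g)"
proof -
  obtain V E r x where gg: "g = (V, E, r, x)" by (cases g) auto
  define Vn where "Vn n = fst (gs n)" for n
  define En where "En n = fst (snd (gs n))" for n
  define rn where "rn n = fst (snd (snd (gs n)))" for n
  define xn where "xn n = snd (snd (snd (gs n)))" for n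
  have gsn: "gs n = (Vn n, En n, rn n, xn n)" for n unfolding Vn_def En_def rn_def xn_def by simp
  have g: "valid_rg (V, E, r, x)" using gv gg by simp
  have gs: "valid_rg (Vn n, En n, rn n, xn n)" for n using gsv gsn by metis
  let ?P = "Pi\<^sub>M UNIV (\<lambda>_::nat \<times> nat. \<nu>)"
  define Q where "Q k n \<phi> \<longleftrightarrow> ball_iso (gs n) g k \<phi> \<and>
      (\<forall>v\<in>gb (gs n) k. dist (mk (gs n) v) (mk g (\<phi> v)) < inverse (real (Suc k)))" for k n \<phi>
  have "\<exists>N. \<forall>n\<ge>N. \<exists>\<phi>. Q k n \<phi>" for k
    using conv unfolding rg_conv_def Q_def gb_def mk_def by (metis inverse_positive_iff_positive of_nat_0_less_iff zero_less_Suc)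
  then obtain \<Phi> L where PL: "\<And>k. eventually (\<lambda>n. k \<le> L n \<and> Q (L n) n (\<Phi> n)) sequentially"
    using diag[of Q] by blast
  define \<psi> where "\<psi> n = inv_into (gb (gs n) (L n)) (\<Phi> n)" for n
  have iso: "eventually (\<lambda>n. ball_iso (V, E, r, x) (Vn n, En n, rn n, xn n) k (\<psi> n)) sequentially" for k
    using PL[of k]
  proof (rule eventually_mono)
    fix n assume "k \<le> L n \<and> Q (L n) n (\<Phi> n)"
    then have kL: "k \<le> L n" and bi: "ball_iso (gs n) g (L n) (\<Phi> n)" unfolding Q_def by auto
    have "ball_iso g (gs n) (L n) (\<psi> n)" unfolding \<psi>_def by (rule ball_iso_inv(1)[OF bi])
    then have "ball_iso g (gs n) k (\<psi> n)" using ball_iso_restrict gv gsv kL by blast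
    then show "ball_iso (V, E, r, x) (Vn n, En n, rn n, xn n) k (\<psi> n)" using gg gsn by metis
  qed
  have key: "eventually (\<lambda>n. \<psi> n w \<in> gb (gs n) (L n) \<and> \<Phi> n (\<psi> n w) = w \<and>
       dist (xn n (\<psi> n w)) (x w) < inverse (real (Suc (L n))) \<and> k \<le> L n \<and> Q (L n) n (\<Phi> n)) sequentially"
    if w: "w \<in> V" for w k
  proof -
    obtain k0 where k0: "w \<in> gball V E r k0" using valid_rgD(7)[OF g] w by blast
    show ?thesis using PL[of "max k k0"]
    proof (rule eventually_mono)
      fix n assume H: "max k k0 \<le> L n \<and> Q (L n) n (\<Phi> n)"
      then have bi: "ball_iso (gs n) g (L n) (\<Phi> n)"
        and d: "\<forall>v\<in>gb (gs n) (L n). dist (mk (gs n) v) (mk g (\<Phi> n v)) < inverse (real (Suc (L n)))"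
        unfolding Q_def by auto
      have "w \<in> gb g (L n)" using k0 gball_mono[of k0 "L n" V E r] H gg by auto
      then have "\<psi> n w \<in> gb (gs n) (L n)" "\<Phi> n (\<psi> n w) = w"
        using ball_iso_inv(2)[OF bi] unfolding \<psi>_def by auto
      moreover then have "dist (xn n (\<psi> n w)) (x w) < inverse (real (Suc (L n)))"
        using d gsn gg by (metis mk_simp)
      ultimately show "\<psi> n w \<in> gb (gs n) (L n) \<and> \<Phi> n (\<psi> n w) = w \<and>
       dist (xn n (\<psi> n w)) (x w) < inverse (real (Suc (L n))) \<and> k \<le> L n \<and> Q (L n) n (\<Phi> n)"
        using H by auto
    qed
  qed
  have marks: "(\<lambda>n. xn n (\<psi> n w)) \<longlonglongrightarrow> x w" if w: "w \<in> V" for w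
  proof (rule tendstoI)
    fix \<epsilon> :: real assume \<epsilon>: "0 < \<epsilon>"
    obtain k where k: "inverse (real (Suc k)) < \<epsilon>" using reals_Archimedean[OF \<epsilon>] by auto
    show "eventually (\<lambda>n. dist (xn n (\<psi> n w)) (x w) < \<epsilon>) sequentially"
      using key[OF w, of k]
    proof (rule eventually_mono)
      fix n assume H: "\<psi> n w \<in> gb (gs n) (L n) \<and> \<Phi> n (\<psi> n w) = w \<and>
       dist (xn n (\<psi> n w)) (x w) < inverse (real (Suc (L n))) \<and> k \<le> L n \<and> Q (L n) n (\<Phi> n)"
      then have "inverse (real (Suc (L n))) \<le> inverse (real (Suc k))"
        by (simp add: le_imp_inverse_le)
      then show "dist (xn n (\<psi> n w)) (x w) < \<epsilon>" using H k by linarith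
    qed
  qed
  define \<sigma> where "\<sigma> n = (if Q (L n) n (\<Phi> n) then (SOME \<sigma>. bij \<sigma> \<and> (\<forall>a\<in>gb (gs n) (L n). \<sigma> a = \<Phi> n a)) else id)" for n
  have \<sigma>: "bij (\<sigma> n) \<and> (Q (L n) n (\<Phi> n) \<longrightarrow> (\<forall>a\<in>gb (gs n) (L n). \<sigma> n a = \<Phi> n a))" for n
  proof (cases "Q (L n) n (\<Phi> n)")
    case True
    then have bi: "ball_iso (gs n) g (L n) (\<Phi> n)" unfolding Q_def by auto
    have "bij_betw (\<Phi> n) (gb (gs n) (L n)) (gb g (L n))"
      using bi gsn gg by (simp add: ball_iso_simp)
    moreover have "finite (gb (gs n) (L n))" "finite (gb g (L n))"
      using gball_finite[OF gs[of n]] gball_finite[OF g] gsn gg by simp_all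
    ultimately have ex: "\<exists>\<sigma>. bij \<sigma> \<and> (\<forall>a\<in>gb (gs n) (L n). \<sigma> a = \<Phi> n a)"
      using extend_bij by blast
    then show ?thesis unfolding \<sigma>_def using True someI_ex[OF ex] by simp
  next
    case False then show ?thesis unfolding \<sigma>_def by simp
  qed
  define \<rho> where "\<rho> n = (\<lambda>(v::nat, j::nat). (\<sigma> n v, j))" for n
  have inj\<rho>: "inj (\<rho> n)" for n
    using \<sigma>[of n] unfolding \<rho>_def inj_def bij_def by auto
  define \<tau> where "\<tau> n = (\<lambda>\<omega>::nat \<times> nat \<Rightarrow> 'e. \<lambda>i\<in>UNIV. \<omega> (\<rho> n i))" for n
  have noise: "(\<lambda>n. \<tau> n \<xi> (\<psi> n w, j)) \<longlonglongrightarrow> \<xi> (w, j)" if w: "w \<in> V" for w j \<xi>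
  proof (rule tendsto_eventually)
    show "eventually (\<lambda>n. \<tau> n \<xi> (\<psi> n w, j) = \<xi> (w, j)) sequentially"
      using key[OF w, of 0]
    proof (rule eventually_mono)
      fix n assume H: "\<psi> n w \<in> gb (gs n) (L n) \<and> \<Phi> n (\<psi> n w) = w \<and>
       dist (xn n (\<psi> n w)) (x w) < inverse (real (Suc (L n))) \<and> 0 \<le> L n \<and> Q (L n) n (\<Phi> n)"
      then have "\<sigma> n (\<psi> n w) = w" using \<sigma>[of n] by auto
      then show "\<tau> n \<xi> (\<psi> n w, j) = \<xi> (w, j)" unfolding \<tau>_def \<rho>_def by simp
    qed
  qed
  define Pn where "Pn n = (\<lambda>\<xi>. rg_class (Vn n, En n, rn n, proc F (Vn n) (En n) (xn n) \<xi>))" for n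
  define P0 where "P0 = (\<lambda>\<xi>. rg_class (V, E, r, proc F V E x \<xi>))"
  have lim: "Gconv (\<lambda>n. Pn n (\<tau> n \<xi>)) (P0 \<xi>)" for \<xi>
    unfolding Pn_def P0_def
    by (rule proc_Gconv[where \<psi>=\<psi> and \<xi>n="\<lambda>n. \<tau> n \<xi>", OF F_cont g gs iso marks noise])
  have measPn: "Pn n \<in> measurable ?P (borel_of Gtop)" for n
    unfolding Pn_def by (rule Phi_meas[OF noise_borel F_cont gs])
  have measP0: "P0 \<in> measurable ?P (borel_of Gtop)"
    unfolding P0_def by (rule Phi_meas[OF noise_borel F_cont g])
  have meas\<tau>: "\<tau> n \<in> measurable ?P ?P" for n
    unfolding \<tau>_def by (rule measurable_restrict) (rule measurable_component_singleton, simp)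
  have distr\<tau>: "distr ?P ?P (\<tau> n) = ?P" for n
    using distr_PiM_reindex[of UNIV "\<lambda>_. \<nu>" "\<rho> n" UNIV] noise_prob inj\<rho>[of n]
    unfolding \<tau>_def by simp
  have PGn: "PGx F \<nu> (gs n) = distr ?P (borel_of Gtop) (Pn n)" for n
    unfolding PGx_def Pn_def using gsn by simp
  have PG0: "PGx F \<nu> g = distr ?P (borel_of Gtop) P0"
    unfolding PGx_def P0_def using gg by simp
  interpret P: prob_space ?P by (rule prob_space_PiM) (use noise_prob in simp)
  show ?thesis
    unfolding weak_conv_top_def
  proof (intro allI impI)
    fix \<phi> :: "(nat \<Rightarrow> 'x) rg set \<Rightarrow> real" assume h: "continuous_map Gtop euclideanreal \<phi> \<and> bounded (\<phi> ` topspace Gtop)"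
    then have \<phi>c: "continuous_map Gtop euclideanreal \<phi>" and \<phi>b: "bounded (\<phi> ` topspace Gtop)" by auto
    obtain B where B: "\<And>c. c \<in> Gstar \<Longrightarrow> norm (\<phi> c) \<le> B"
      using \<phi>b unfolding bounded_iff topspace_Gtop by blast
    have \<phi>m: "\<phi> \<in> borel_measurable (borel_of Gtop)" by (rule cont_measurable[OF \<phi>c])
    have int_n: "(\<integral>z. \<phi> z \<partial>PGx F \<nu> (gs n)) = (\<integral>\<xi>. \<phi> (Pn n (\<tau> n \<xi>)) \<partial>?P)" for n
    proof -
      have "(\<integral>z. \<phi> z \<partial>PGx F \<nu> (gs n)) = (\<integral>\<xi>. \<phi> (Pn n \<xi>) \<partial>?P)"
        unfolding PGn by (rule integral_distr[OF measPn[of n] \<phi>m])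
      also have "\<dots> = (\<integral>\<xi>. \<phi> (Pn n \<xi>) \<partial>distr ?P ?P (\<tau> n))" by (simp add: distr\<tau>)
      also have "\<dots> = (\<integral>\<xi>. \<phi> (Pn n (\<tau> n \<xi>)) \<partial>?P)"
        by (rule integral_distr[OF meas\<tau>]) (rule measurable_compose[OF measPn \<phi>m])
      finally show ?thesis .
    qed
    have int_0: "(\<integral>z. \<phi> z \<partial>PGx F \<nu> g) = (\<integral>\<xi>. \<phi> (P0 \<xi>) \<partial>?P)"
      unfolding PG0 by (rule integral_distr[OF measP0 \<phi>m])
    have "(\<lambda>n. \<integral>\<xi>. \<phi> (Pn n (\<tau> n \<xi>)) \<partial>?P) \<longlonglongrightarrow> (\<integral>\<xi>. \<phi> (P0 \<xi>) \<partial>?P)"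
    proof (rule integral_dominated_convergence[where w="\<lambda>_. B"])
      show "(\<lambda>\<xi>. \<phi> (P0 \<xi>)) \<in> borel_measurable ?P" by (rule measurable_compose[OF measP0 \<phi>m])
      show "\<And>n. (\<lambda>\<xi>. \<phi> (Pn n (\<tau> n \<xi>))) \<in> borel_measurable ?P"
        by (rule measurable_compose[OF meas\<tau> measurable_compose[OF measPn \<phi>m]])
      show "integrable ?P (\<lambda>_. B)" by simp
      show "AE \<xi> in ?P. (\<lambda>n. \<phi> (Pn n (\<tau> n \<xi>))) \<longlonglongrightarrow> \<phi> (P0 \<xi>)"
      proof (rule always_eventually, rule allI)
        fix \<xi>
        have mem: "\<forall>n. Pn n (\<tau> n \<xi>) \<in> Gstar" "P0 \<xi> \<in> Gstar"
          unfolding Pn_def P0_def using class_proc_Gstar gs g by blast+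
        have "limitin Gtop (\<lambda>n. Pn n (\<tau> n \<xi>)) (P0 \<xi>) sequentially"
          by (rule Gconv_limitin) (use mem lim in auto)
        from continuous_map_limit[OF \<phi>c this]
        show "(\<lambda>n. \<phi> (Pn n (\<tau> n \<xi>))) \<longlonglongrightarrow> \<phi> (P0 \<xi>)" by (simp add: o_def)
      qed
      show "\<And>n. AE \<xi> in ?P. norm (\<phi> (Pn n (\<tau> n \<xi>))) \<le> B"
        using B class_proc_Gstar gs unfolding Pn_def by (blast intro: always_eventually)
    qed
    then show "(\<lambda>n. \<integral>z. \<phi> z \<partial>PGx F \<nu> (gs n)) \<longlonglongrightarrow> (\<integral>z. \<phi> z \<partial>PGx F \<nu> g)"
      using int_n int_0 by simp
  qed
qed

context
  fixes F :: "nat \<Rightarrow> (nat \<Rightarrow> 'x::polish_space) \<Rightarrow> (nat \<Rightarrow> 'x) multiset \<Rightarrow> 'e::polish_space \<Rightarrow> 'x"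
    and \<nu> :: "'e measure"
  assumes noise_prob: "prob_space \<nu>"
    and noise_borel: "sets \<nu> = sets (borel :: 'e measure)"
    and F_cont: "\<And>k. continuous_map
        (prod_topology (hist_top k) (prod_topology (mset_topology (hist_top k)) (euclidean :: 'e topology)))
        (euclidean :: 'x topology) (\<lambda>(a, m, e). F k a m e)"
begin

lemma PGx_prob:
  assumes gv: "valid_rg g"
  shows "prob_space (PGx F \<nu> g)" "sets (PGx F \<nu> g) = sets (borel_of Gtop)"
proof -
  obtain V E r x where gg: "g = (V, E, r, x)" by (cases g) auto
  have g: "valid_rg (V, E, r, x)" using gv gg by simp
  interpret P: prob_space "Pi\<^sub>M UNIV (\<lambda>_::nat \<times> nat. \<nu>)" by (rule prob_space_PiM) (use noise_prob in simp)
  have m: "(\<lambda>\<xi>. rg_class (V, E, r, proc F V E x \<xi>)) \<in> measurable (Pi\<^sub>M UNIV (\<lambda>_. \<nu>)) (borel_of Gtop)"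
    by (rule Phi_meas[OF noise_borel F_cont g])
  show "prob_space (PGx F \<nu> g)" unfolding gg PGx_def using P.prob_space_distr[OF m] by simp
  show "sets (PGx F \<nu> g) = sets (borel_of Gtop)" unfolding gg PGx_def by simp
qed

lemma Pclass_rep: "Pclass F \<nu> c = PGx F \<nu> (rep c)"
  unfolding Pclass_def rep_def ..

lemma Pclass_prob:
  assumes "c \<in> Gstar"
  shows "prob_space (Pclass F \<nu> c)" "sets (Pclass F \<nu> c) = sets (borel_of Gtop)"
  using PGx_prob[OF Gstar_mem[OF assms rep_in[OF assms]]] unfolding Pclass_rep by auto

lemma h_cont:
  fixes \<phi> :: "(nat \<Rightarrow> 'x) rg set \<Rightarrow> real"
  assumes \<phi>c: "continuous_map Gtop euclideanreal \<phi>" and \<phi>b: "bounded (\<phi> ` topspace Gtop)"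
  shows "continuous_map Gtop euclideanreal (\<lambda>c. \<integral>z. \<phi> z \<partial>Pclass F \<nu> c)"
proof (rule seqc_cont)
  show "seqc (\<lambda>c. \<integral>z. \<phi> z \<partial>Pclass F \<nu> c)"
    unfolding seqc_def
  proof (intro allI impI)
    fix cs :: "nat \<Rightarrow> 'x rg set" and c assume cs: "\<forall>n. cs n \<in> Gstar" and c: "c \<in> Gstar" and cv: "Gconv cs c"
    have rc: "rg_conv (\<lambda>n. rep (cs n)) (rep c)" using Gconv_rep cs c cv by blast
    have v1: "\<And>n. valid_rg (rep (cs n))" using cs Gstar_mem rep_in by blast
    have v2: "valid_rg (rep c)" using c Gstar_mem rep_in by blast
    have "weak_conv_top Gtop (\<lambda>n. PGx F \<nu> (rep (cs n))) (PGx F \<nu> (rep c))"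
      by (rule part1[OF noise_prob noise_borel F_cont v1 v2 rc])
    then show "(\<lambda>n. \<integral>z. \<phi> z \<partial>Pclass F \<nu> (cs n)) \<longlonglongrightarrow> (\<integral>z. \<phi> z \<partial>Pclass F \<nu> c)"
      unfolding weak_conv_top_def Pclass_rep using \<phi>c \<phi>b by blast
  qed
qed

lemma h_bound:
  fixes \<phi> :: "(nat \<Rightarrow> 'x) rg set \<Rightarrow> real"
  assumes \<phi>c: "continuous_map Gtop euclideanreal \<phi>" and B: "\<And>c. c \<in> Gstar \<Longrightarrow> \<bar>\<phi> c\<bar> \<le> B"
    and c: "c \<in> Gstar"
  shows "\<bar>\<integral>z. \<phi> z \<partial>Pclass F \<nu> c\<bar> \<le> B"
proof -
  interpret K: prob_space "Pclass F \<nu> c" using Pclass_prob[OF c] by simp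
  have sp: "space (Pclass F \<nu> c) = Gstar"
    using sets_eq_imp_space_eq[OF Pclass_prob(2)[OF c]] by (simp add: space_borel_of topspace_Gtop)
  have m: "\<phi> \<in> borel_measurable (Pclass F \<nu> c)"
    using cont_measurable[OF \<phi>c] measurable_cong_sets[OF Pclass_prob(2)[OF c] refl] by blast
  have int: "integrable (Pclass F \<nu> c) \<phi>"
    by (rule K.integrable_const_bound[where B=B]) (use B sp m in auto)
  have "(\<integral>z. \<phi> z \<partial>Pclass F \<nu> c) \<le> B"
    by (rule K.integral_le_const[OF int]) (use B sp in \<open>auto intro!: AE_I2 simp: abs_le_iff\<close>)
  moreover have "- B \<le> (\<integral>z. \<phi> z \<partial>Pclass F \<nu> c)"
  proof (rule K.integral_ge_const[OF int], rule AE_I2)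
    fix z assume "z \<in> space (Pclass F \<nu> c)"
    then have "\<bar>\<phi> z\<bar> \<le> B" using B sp by auto
    then show "- B \<le> \<phi> z" by linarith
  qed
  ultimately show ?thesis by simp
qed

lemma bound_of:
  fixes \<phi> :: "(nat \<Rightarrow> 'x) rg set \<Rightarrow> real"
  assumes "bounded (\<phi> ` topspace Gtop)"
  obtains B where "\<And>c. c \<in> Gstar \<Longrightarrow> \<bar>\<phi> c\<bar> \<le> B"
  using assms unfolding bounded_iff topspace_Gtop by auto

lemma h_bounded:
  fixes \<phi> :: "(nat \<Rightarrow> 'x) rg set \<Rightarrow> real"
  assumes \<phi>c: "continuous_map Gtop euclideanreal \<phi>" and \<phi>b: "bounded (\<phi> ` topspace Gtop)"
  shows "bounded ((\<lambda>c. \<integral>z. \<phi> z \<partial>Pclass F \<nu> c) ` topspace Gtop)"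
proof -
  obtain B where B: "\<And>c. c \<in> Gstar \<Longrightarrow> \<bar>\<phi> c\<bar> \<le> B" using bound_of[OF \<phi>b] by blast
  show ?thesis unfolding bounded_iff topspace_Gtop using h_bound[OF \<phi>c B] by auto
qed

lemma PM_unique:
  fixes M :: "'x rg set measure"
  assumes M: "prob_space M" "sets M = sets (borel_of Gtop)"
  shows "\<exists>!Q. is_PM F \<nu> M Q"
proof -
  have spM: "space M = Gstar" using sets_eq_imp_space_eq[OF M(2)] by (simp add: space_borel_of topspace_Gtop)
  let ?K = "Pclass F \<nu>"
  have hm: "(\<lambda>c. \<integral>z. \<phi> z \<partial>?K c) \<in> borel_measurable M"
    if "continuous_map Gtop euclideanreal \<phi>" "bounded (\<phi> ` topspace Gtop)" for \<phi> :: "(nat \<Rightarrow> 'x) rg set \<Rightarrow> real"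
    using cont_measurable[OF h_cont[OF that]] measurable_cong_sets[OF M(2) refl] by blast
  have KM: "?K \<in> measurable M (prob_algebra (borel_of Gtop))"
    by (rule kernel_measurable) (use Pclass_prob spM hm in auto)
  let ?Q = "bind M ?K"
  have Mspace: "M \<in> space (prob_algebra M)" using M(1) by (simp add: space_prob_algebra)
  have Qp: "prob_space ?Q" by (rule prob_space_bind'[OF Mspace KM])
  have Qs: "sets ?Q = sets (borel_of Gtop)" by (rule sets_bind'[OF Mspace KM])
  have Qi: "(\<integral>z. \<phi> z \<partial>?Q) = (\<integral>c. (\<integral>z. \<phi> z \<partial>?K c) \<partial>M)"
    if \<phi>c: "continuous_map Gtop euclideanreal \<phi>" and \<phi>b: "bounded (\<phi> ` topspace Gtop)" for \<phi> :: "(nat \<Rightarrow> 'x) rg set \<Rightarrow> real"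
  proof -
    obtain B where B: "\<And>c. c \<in> Gstar \<Longrightarrow> \<bar>\<phi> c\<bar> \<le> B" using bound_of[OF \<phi>b] by blast
    show ?thesis
    proof (rule integral_bind[where K="borel_of Gtop" and B=B and B'=1])
      show "\<phi> \<in> borel_measurable (borel_of Gtop)" by (rule cont_measurable[OF \<phi>c])
      show "\<And>x. x \<in> space (borel_of Gtop) \<Longrightarrow> \<bar>\<phi> x\<bar> \<le> B" using B by (simp add: space_borel_of topspace_Gtop)
      show "?K \<in> measurable M (subprob_algebra (borel_of Gtop))" by (rule measurable_prob_algebraD[OF KM])
      show "finite_measure M" using M(1) by (rule prob_space.finite_measure)
      show "AE x in M. emeasure (?K x) (space (?K x)) \<le> ennreal 1"
      proof (rule AE_I2)
        fix x assume "x \<in> space M"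
        then have "prob_space (?K x)" using Pclass_prob spM by auto
        then show "emeasure (?K x) (space (?K x)) \<le> ennreal 1" by (simp add: prob_space.emeasure_space_1)
      qed
    qed
  qed
  have ex: "is_PM F \<nu> M ?Q" unfolding is_PM_def using Qp Qs Qi hm by blast
  show ?thesis
  proof (rule ex1I[where P="is_PM F \<nu> M" and a="?Q", OF ex])
    fix Q2 assume Q2: "is_PM F \<nu> M Q2"
    show "Q2 = ?Q"
    proof (rule measure_det)
      show "finite_measure Q2" "sets Q2 = sets (borel_of Gtop)" using Q2 unfolding is_PM_def
        by (auto intro: prob_space.finite_measure)
      show "finite_measure ?Q" using Qp by (rule prob_space.finite_measure)
      show "sets ?Q = sets (borel_of Gtop)" by (rule Qs)
      fix \<phi> :: "(nat \<Rightarrow> 'x) rg set \<Rightarrow> real"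
      assume "continuous_map Gtop euclideanreal \<phi>" "bounded (\<phi> ` topspace Gtop)"
      then show "(\<integral>z. \<phi> z \<partial>Q2) = (\<integral>z. \<phi> z \<partial>?Q)" using Q2 Qi unfolding is_PM_def by auto
    qed
  qed
qed

lemma PM_prop:
  fixes M :: "'x rg set measure"
  assumes M: "prob_space M" "sets M = sets (borel_of Gtop)"
  shows "is_PM F \<nu> M (PM F \<nu> M)"
  unfolding PM_def using PM_unique[OF M] by (rule theI')

end

theorem theorem3p2:
  fixes F :: "nat \<Rightarrow> (nat \<Rightarrow> 'x::polish_space) \<Rightarrow> (nat \<Rightarrow> 'x) multiset \<Rightarrow> 'e::polish_space \<Rightarrow> 'x"
    and \<nu> :: "'e measure"
  assumes noise_prob: "prob_space \<nu>"
    and noise_borel: "sets \<nu> = sets (borel :: 'e measure)"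
    and F_cont: "\<And>k. continuous_map
        (prod_topology (hist_top k) (prod_topology (mset_topology (hist_top k)) (euclidean :: 'e topology)))
        (euclidean :: 'x topology) (\<lambda>(a, m, e). F k a m e)"
  shows "(\<forall>gs g. (\<forall>n. valid_rg (gs n)) \<and> valid_rg g \<and> rg_conv gs g \<longrightarrow>
            weak_conv_top Gtop (\<lambda>n. PGx F \<nu> (gs n)) (PGx F \<nu> g))
       \<and> (\<forall>M. prob_space M \<and> sets M = sets (borel_of (Gtop :: 'x rg set topology)) \<longrightarrow>
            (\<exists>!Q. is_PM F \<nu> M Q))
       \<and> (\<forall>Ms M. (\<forall>n. prob_space (Ms n) \<and> sets (Ms n) = sets (borel_of (Gtop :: 'x rg set topology))) \<and>
             prob_space M \<and> sets M = sets (borel_of (Gtop :: 'x rg set topology)) \<and>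
             weak_conv_top Gtop Ms M \<longrightarrow>
            weak_conv_top Gtop (\<lambda>n. PM F \<nu> (Ms n)) (PM F \<nu> M))"
proof (intro conjI allI impI)
  fix gs and g :: "'x rg"
  assume "(\<forall>n. valid_rg (gs n)) \<and> valid_rg g \<and> rg_conv gs g"
  then show "weak_conv_top Gtop (\<lambda>n. PGx F \<nu> (gs n)) (PGx F \<nu> g)"
    using part1[OF noise_prob noise_borel F_cont] by blast
next
  fix M :: "'x rg set measure"
  assume "prob_space M \<and> sets M = sets (borel_of Gtop)"
  then show "\<exists>!Q. is_PM F \<nu> M Q" using PM_unique[OF noise_prob noise_borel F_cont] by blast
next
  fix Ms and M :: "'x rg set measure"
  assume H: "(\<forall>n. prob_space (Ms n) \<and> sets (Ms n) = sets (borel_of (Gtop :: 'x rg set topology))) \<and>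
             prob_space M \<and> sets M = sets (borel_of (Gtop :: 'x rg set topology)) \<and>
             weak_conv_top Gtop Ms M"
  have PMn: "is_PM F \<nu> (Ms n) (PM F \<nu> (Ms n))" for n
    using PM_prop[OF noise_prob noise_borel F_cont] H by blast
  have PM0: "is_PM F \<nu> M (PM F \<nu> M)"
    using PM_prop[OF noise_prob noise_borel F_cont] H by blast
  show "weak_conv_top Gtop (\<lambda>n. PM F \<nu> (Ms n)) (PM F \<nu> M)"
    unfolding weak_conv_top_def
  proof (intro allI impI)
    fix \<phi> :: "(nat \<Rightarrow> 'x) rg set \<Rightarrow> real"
    assume \<phi>: "continuous_map Gtop euclideanreal \<phi> \<and> bounded (\<phi> ` topspace Gtop)"
    let ?h = "\<lambda>c. \<integral>z. \<phi> z \<partial>Pclass F \<nu> c"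
    have hc: "continuous_map Gtop euclideanreal ?h"
      using h_cont[OF noise_prob noise_borel F_cont] \<phi> by blast
    have hb: "bounded (?h ` topspace Gtop)"
      using h_bounded[OF noise_prob noise_borel F_cont] \<phi> by blast
    have "(\<lambda>n. \<integral>c. ?h c \<partial>Ms n) \<longlonglongrightarrow> (\<integral>c. ?h c \<partial>M)"
      using H hc hb unfolding weak_conv_top_def by blast
    moreover have "(\<integral>z. \<phi> z \<partial>PM F \<nu> (Ms n)) = (\<integral>c. ?h c \<partial>Ms n)" for n
      using PMn[of n] \<phi> unfolding is_PM_def by blast
    moreover have "(\<integral>z. \<phi> z \<partial>PM F \<nu> M) = (\<integral>c. ?h c \<partial>M)"
      using PM0 \<phi> unfolding is_PM_def by blast
    ultimately show "(\<lambda>n. \<integral>z. \<phi> z \<partial>PM F \<nu> (Ms n)) \<longlonglongrightarrow> (\<integral>z. \<phi> z \<partial>PM F \<nu> M)" by simp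
  qed
qed


end
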